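(* Let $\alpha\in(0,1)$ and $F\in C^\infty(\mathbb{S}^1_{2\pi}\times(0,\infty))$. Let $(X,\nu)\in C([0,\infty);C^1(\mathbb{S}^1_{2\pi};\mathbb{R}^2\times\mathbb{S}^1))\cap C^\infty(\mathbb{S}^1_{2\pi}\times(0,\infty);\mathbb{R}^2\times\mathbb{S}^1)$ be an inverse curvature flow starting from $(X_0,\nu_0)\in C^{1+\alpha}(\mathbb{S}^1_{2\pi};\mathbb{R}^2\times\mathbb{S}^1)$, with $(X_0,\nu_0)$ $\ell$-convex, whose tangent velocity satisfies $T=\partial_u\beta/\ell^2 + F\beta$ on $\mathbb{S}^1_{2\pi}\times(0,\infty)$. Then there exist $n\in\mathbb{N}$ and $\phi\in C([0,\infty);C^1(\mathbb{S}^1_{2\pi};\mathbb{S}^1_{2\pi}))\cap C^\infty(\mathbb{S}^1_{2\pi}\times(0,\infty);\mathbb{S}^1_{2\pi})$ with $\phi(\cdot,0)=\phi_0$ a $C^1$-diffeomorphism belonging to $C^{1+\alpha}$, such that $\phi(\cdot,t)$ is a diffeomorphism of $\mathbb{S}^1_{2\pi}$ for every $t\ge0$ and the reparametrized flow $(\tilde X(u,t),\tilde\nu(u,t)) := (X(\phi(u,t),t),\nu(\phi(u,t),t))$ satisfies $$\tilde\nu(u,0)=(\sin(nu),-\cos(nu))^\top\ (u\in\mathbb{S}^1_{2\pi}),\qquad \partial_t\tilde X = \frac{\tilde\beta}{\tilde\ell}\tilde\nu + \frac{\partial_u\tilde\beta}{\tilde\ell^2}\tilde\mu\ \text{ on }\mathbb{S}^1_{2\pi}\times(0,\infty),$$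 where $\tilde\mu=J\tilde\nu$ and $(\tilde\ell,\tilde\beta)$ is the Legendre curvature of $(\tilde X,\tilde\nu)$.
   Context: $\mathbb{S}^1_{2\pi}=\mathbb{R}/2\pi\mathbb{Z}$, $\mathbb{S}^1$ the unit circle, $J$ anticlockwise rotation by $\pi/2$. A Legendre curve is a $C^1$ pair $(X,\nu):\mathbb{S}^1_{2\pi}\to\mathbb{R}^2\times\mathbb{S}^1$ with $\langle\partial_uX,\nu\rangle=0$; $\mu=J\nu$; Legendre curvature $\ell=\langle\partial_u\nu,\mu\rangle$, $\beta=\langle\partial_uX,\mu\rangle$; $\ell$-convex means $\ell>0$. A flow of Legendre curves has time slices that are Legendre curves; normal velocity $N=\langle\partial_tX,\nu\rangle$, tangent velocity $T=\langle\partial_tX,\mu\rangle$. An inverse curvature flow is a flow of Legendre curves, smooth for $t>0$, whose slices are $\ell$-convex for $t>0$ and with $N=\beta/\ell$ for $t>0$. *)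

theory Defs
  imports "HOL-Analysis.Analysis"
begin

text \<open>The plane R^2 is identified with the complex numbers (inner product
  is the real inner product of complex numbers), J is multiplication by the imaginary
  unit. Functions on S^1_{2pi} are 2pi-periodic functions on the reals.\<close>

definition Jrot :: "complex \<Rightarrow> complex" where
  "Jrot z = \<i> * z"

definition du :: "(real \<Rightarrow> real \<Rightarrow> 'b::real_normed_vector) \<Rightarrow> real \<Rightarrow> real \<Rightarrow> 'b" where
  "du f u t = vector_derivative (\<lambda>v. f v t) (at u)"

definition dt :: "(real \<Rightarrow> real \<Rightarrow> 'b::real_normed_vector) \<Rightarrow> real \<Rightarrow> real \<Rightarrow> 'b" where
  "dt f u t = vector_derivative (\<lambda>s. f u s) (at t)"

text \<open>Smoothness on a set of the (u,t)-plane: all iterated partial derivatives exist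
  and are continuous. Direction False = u, True = t.\<close>
definition line2 :: "bool \<Rightarrow> real \<times> real \<Rightarrow> real \<Rightarrow> real \<times> real" where
  "line2 d p s = (if d then (fst p, s) else (s, snd p))"

definition coord2 :: "bool \<Rightarrow> real \<times> real \<Rightarrow> real" where
  "coord2 d p = (if d then snd p else fst p)"

definition pd2 :: "bool \<Rightarrow> (real \<times> real \<Rightarrow> 'b::real_normed_vector) \<Rightarrow> real \<times> real \<Rightarrow> 'b" where
  "pd2 d g p = vector_derivative (\<lambda>s. g (line2 d p s)) (at (coord2 d p))"

definition iter_pd2 :: "bool list \<Rightarrow> (real \<times> real \<Rightarrow> 'b::real_normed_vector) \<Rightarrow> real \<times> real \<Rightarrow> 'b" where
  "iter_pd2 ds g = foldr pd2 ds g"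

definition smooth_on2 :: "(real \<times> real) set \<Rightarrow> (real \<times> real \<Rightarrow> 'b::real_normed_vector) \<Rightarrow> bool" where
  "smooth_on2 S g \<longleftrightarrow>
     (\<forall>ds. continuous_on S (iter_pd2 ds g) \<and>
       (\<forall>d. \<forall>p\<in>S. (\<lambda>s. iter_pd2 ds g (line2 d p s)) differentiable (at (coord2 d p))))"

definition smooth_flow :: "(real \<Rightarrow> real \<Rightarrow> 'b::real_normed_vector) \<Rightarrow> bool" where
  "smooth_flow f \<longleftrightarrow> smooth_on2 (UNIV \<times> {0<..}) (\<lambda>(u,t). f u t)"

text \<open>f in C([0,infinity); C^1(S^1)): each slice is C^1 and f, du f are jointly continuous
  on S^1 x [0,infinity) (equivalent by compactness of S^1).\<close>
definition C0C1_flow :: "(real \<Rightarrow> real \<Rightarrow> 'b::real_normed_vector) \<Rightarrow> bool" where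
  "C0C1_flow f \<longleftrightarrow>
     (\<forall>t\<ge>0. \<forall>u. (\<lambda>v. f v t) differentiable (at u)) \<and>
     continuous_on (UNIV \<times> {0..}) (\<lambda>(u,t). f u t) \<and>
     continuous_on (UNIV \<times> {0..}) (\<lambda>(u,t). du f u t)"

definition periodic_flow :: "(real \<Rightarrow> real \<Rightarrow> 'b) \<Rightarrow> bool" where
  "periodic_flow f \<longleftrightarrow> (\<forall>t\<ge>0. \<forall>u. f (u + 2*pi) t = f u t)"

definition holder :: "real \<Rightarrow> (real \<Rightarrow> 'b::real_normed_vector) \<Rightarrow> bool" where
  "holder a f \<longleftrightarrow> (\<exists>C. \<forall>x y. norm (f x - f y) \<le> C * \<bar>x - y\<bar> powr a)"

definition C1alpha :: "real \<Rightarrow> (real \<Rightarrow> 'b::real_normed_vector) \<Rightarrow> bool" where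
  "C1alpha a f \<longleftrightarrow> (\<forall>u. f differentiable (at u)) \<and>
     continuous_on UNIV (\<lambda>u. vector_derivative f (at u)) \<and>
     holder a (\<lambda>u. vector_derivative f (at u))"

definition leg_ell :: "(real \<Rightarrow> real \<Rightarrow> complex) \<Rightarrow> real \<Rightarrow> real \<Rightarrow> real" where
  "leg_ell \<nu> u t = du \<nu> u t \<bullet> Jrot (\<nu> u t)"

definition leg_beta :: "(real \<Rightarrow> real \<Rightarrow> complex) \<Rightarrow> (real \<Rightarrow> real \<Rightarrow> complex) \<Rightarrow> real \<Rightarrow> real \<Rightarrow> real" where
  "leg_beta X \<nu> u t = du X u t \<bullet> Jrot (\<nu> u t)"

definition legendre_flow :: "(real \<Rightarrow> real \<Rightarrow> complex) \<Rightarrow> (real \<Rightarrow> real \<Rightarrow> complex) \<Rightarrow> bool" where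
  "legendre_flow X \<nu> \<longleftrightarrow>
     periodic_flow X \<and> periodic_flow \<nu> \<and> C0C1_flow X \<and> C0C1_flow \<nu> \<and>
     (\<forall>t\<ge>0. \<forall>u. norm (\<nu> u t) = 1 \<and> du X u t \<bullet> \<nu> u t = 0)"

definition inverse_curvature_flow :: "(real \<Rightarrow> real \<Rightarrow> complex) \<Rightarrow> (real \<Rightarrow> real \<Rightarrow> complex) \<Rightarrow> bool" where
  "inverse_curvature_flow X \<nu> \<longleftrightarrow>
     legendre_flow X \<nu> \<and> smooth_flow X \<and> smooth_flow \<nu> \<and>
     (\<forall>t>0. \<forall>u. leg_ell \<nu> u t > 0 \<and>
        dt X u t \<bullet> \<nu> u t = leg_beta X \<nu> u t / leg_ell \<nu> u t)"

end

theory Submission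
  imports Defs
begin

definition ldiff :: "(real \<times> real) set \<Rightarrow> (real \<times> real \<Rightarrow> 'b::real_normed_vector) \<Rightarrow> bool" where
  "ldiff S g \<longleftrightarrow> (\<forall>d. \<forall>p\<in>S. (\<lambda>s. g (line2 d p s)) differentiable (at (coord2 d p)))"

lemma iter_pd2_Nil[simp]: "iter_pd2 [] g = g" by (simp add: iter_pd2_def)
lemma iter_pd2_Cons: "iter_pd2 (d#ds) g = pd2 d (iter_pd2 ds g)" by (simp add: iter_pd2_def)
lemma iter_pd2_snoc: "iter_pd2 (ds @ [d]) g = iter_pd2 ds (pd2 d g)" by (simp add: iter_pd2_def)

lemma line2_coord2[simp]: "line2 d p (coord2 d p) = p"
  by (cases p) (auto simp: line2_def coord2_def)

lemma dist_line2: "dist (line2 d p s) p = dist s (coord2 d p)"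
  by (cases p) (auto simp: line2_def coord2_def dist_Pair_Pair dist_real_def)

lemma smooth_on2_iff:
  "smooth_on2 S g \<longleftrightarrow> continuous_on S g \<and> ldiff S g \<and> (\<forall>d. smooth_on2 S (pd2 d g))"
proof
  assume H: "smooth_on2 S g"
  have "smooth_on2 S (pd2 d g)" for d
    using H unfolding smooth_on2_def by (metis iter_pd2_snoc)
  then show "continuous_on S g \<and> ldiff S g \<and> (\<forall>d. smooth_on2 S (pd2 d g))"
    using H unfolding smooth_on2_def ldiff_def by (metis iter_pd2_Nil)
next
  assume H: "continuous_on S g \<and> ldiff S g \<and> (\<forall>d. smooth_on2 S (pd2 d g))"
  show "smooth_on2 S g" unfolding smooth_on2_def
  proof
    fix ds :: "bool list"
    show "continuous_on S (iter_pd2 ds g) \<and>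
         (\<forall>d. \<forall>p\<in>S. (\<lambda>s. iter_pd2 ds g (line2 d p s)) differentiable at (coord2 d p))"
    proof (cases ds rule: rev_exhaust)
      case Nil then show ?thesis using H by (simp add: ldiff_def)
    next
      case (snoc ys y)
      then show ?thesis using H unfolding smooth_on2_def by (simp add: iter_pd2_snoc)
    qed
  qed
qed

lemma eq_near_line:
  assumes "open S" "p \<in> S" "\<And>q. q \<in> S \<Longrightarrow> g q = h q"
  shows "\<exists>e>0. \<forall>s. dist s (coord2 d p) < e \<longrightarrow> g (line2 d p s) = h (line2 d p s)"
proof -
  obtain e where e: "e > 0" "ball p e \<subseteq> S" using assms openE by blast
  have "dist s (coord2 d p) < e \<Longrightarrow> g (line2 d p s) = h (line2 d p s)" for s
  proof -
    assume "dist s (coord2 d p) < e"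
    then have "line2 d p s \<in> ball p e" using dist_line2[of d p s] by (simp add: dist_commute)
    then show ?thesis using e assms(3) by blast
  qed
  then show ?thesis using e(1) by blast
qed

lemma pd2_local:
  assumes "open S" "p \<in> S" "\<And>q. q \<in> S \<Longrightarrow> g q = h q"
  shows "pd2 d g p = pd2 d h p"
proof -
  obtain e where e: "e > 0" "\<And>s. dist s (coord2 d p) < e \<Longrightarrow> g (line2 d p s) = h (line2 d p s)"
    using eq_near_line[of S p g h d] assms by blast
  have "eventually (\<lambda>s. s \<in> UNIV \<longrightarrow> g (line2 d p s) = h (line2 d p s)) (nhds (coord2 d p))"
    using e by (auto simp: eventually_nhds_metric dist_commute intro!: exI[of _ e])
  then show ?thesis unfolding pd2_def
    by (intro vector_derivative_cong_eq) auto
qed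

lemma ldiff_local:
  assumes "open S" "p \<in> S" "\<And>q. q \<in> S \<Longrightarrow> g q = h q"
    and "(\<lambda>s. g (line2 d p s)) differentiable (at (coord2 d p))"
  shows "(\<lambda>s. h (line2 d p s)) differentiable (at (coord2 d p))"
proof -
  obtain e where e: "e > 0" "\<And>s. dist s (coord2 d p) < e \<Longrightarrow> g (line2 d p s) = h (line2 d p s)"
    using eq_near_line[of S p g h d] assms by blast
  have "((\<lambda>s. g (line2 d p s)) has_vector_derivative vector_derivative (\<lambda>s. g (line2 d p s)) (at (coord2 d p))) (at (coord2 d p))"
    using assms(4) vector_derivative_works by blast
  then have "((\<lambda>s. h (line2 d p s)) has_vector_derivative vector_derivative (\<lambda>s. g (line2 d p s)) (at (coord2 d p))) (at (coord2 d p))"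
    by (rule has_vector_derivative_transform_within_open[where S="ball (coord2 d p) e"])
       (use e in \<open>auto simp: dist_commute\<close>)
  then show ?thesis using differentiableI_vector by blast
qed

lemma smooth_on2_coind:
  assumes S: "open S" and Pg: "P g"
    and step: "\<And>g. P g \<Longrightarrow> continuous_on S g \<and> ldiff S g \<and>
                 (\<forall>d. \<exists>h. P h \<and> (\<forall>p\<in>S. pd2 d g p = h p))"
  shows "smooth_on2 S g"
proof -
  have main: "\<forall>g. P g \<longrightarrow> (\<exists>h. P h \<and> (\<forall>p\<in>S. iter_pd2 ds g p = h p))" for ds
  proof (induction ds)
    case Nil then show ?case by auto
  next
    case (Cons d ds)
    show ?case
    proof (intro allI impI)
      fix g assume "P g"
      then obtain h where h: "P h" "\<forall>p\<in>S. iter_pd2 ds g p = h p" using Cons by blast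
      then obtain h' where h': "P h'" "\<forall>p\<in>S. pd2 d h p = h' p" using step by blast
      have "\<forall>p\<in>S. iter_pd2 (d#ds) g p = h' p"
        using h h' pd2_local[OF S, of _ "iter_pd2 ds g" h d] by (simp add: iter_pd2_Cons)
      then show "\<exists>h. P h \<and> (\<forall>p\<in>S. iter_pd2 (d # ds) g p = h p)" using h' by blast
    qed
  qed
  show ?thesis unfolding smooth_on2_def
  proof (intro allI conjI ballI)
    fix ds
    obtain h where h: "P h" "\<forall>p\<in>S. iter_pd2 ds g p = h p" using main Pg by blast
    show "continuous_on S (iter_pd2 ds g)"
      using step[OF h(1)] h(2) continuous_on_cong by (metis (mono_tags, lifting))
    fix d p assume "p \<in> S"
    show "(\<lambda>s. iter_pd2 ds g (line2 d p s)) differentiable at (coord2 d p)"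
      using ldiff_local[OF S \<open>p\<in>S\<close>, of h "iter_pd2 ds g" d] step[OF h(1)] h(2) \<open>p\<in>S\<close>
      unfolding ldiff_def by auto
  qed
qed


lemma ldiff_hvd:
  assumes "ldiff S g" "p \<in> S"
  shows "((\<lambda>s. g (line2 d p s)) has_vector_derivative pd2 d g p) (at (coord2 d p))"
  using assms unfolding ldiff_def pd2_def using vector_derivative_works by blast

lemma pd2_eqI:
  assumes "((\<lambda>s. g (line2 d p s)) has_vector_derivative D) (at (coord2 d p))"
  shows "pd2 d g p = D"
  using assms unfolding pd2_def by (rule vector_derivative_at)

lemma smooth_const: "open S \<Longrightarrow> smooth_on2 S (\<lambda>_. c)"
  apply (rule smooth_on2_coind[where P="\<lambda>g. \<exists>c. g = (\<lambda>_. c)"])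
  apply (auto simp: ldiff_def pd2_def)
  done

lemma line2_fst: "fst (line2 d p s) = (if d then fst p else s)"
  and line2_snd: "snd (line2 d p s) = (if d then s else snd p)"
  and coord2_simps: "coord2 False p = fst p" "coord2 True p = snd p"
  by (auto simp: line2_def coord2_def)

lemma line2_fst_fun: "(\<lambda>s. fst (line2 d p s)) = (if d then (\<lambda>s. fst p) else (\<lambda>s. s))"
  and line2_snd_fun: "(\<lambda>s. snd (line2 d p s)) = (if d then (\<lambda>s. s) else (\<lambda>s. snd p))"
  by (auto simp: line2_def)

lemma smooth_fst: "open S \<Longrightarrow> smooth_on2 S fst"
proof (rule smooth_on2_coind[where P="\<lambda>g. g = fst \<or> (\<exists>c. g = (\<lambda>_. c))"])
  fix g :: "real \<times> real \<Rightarrow> real" assume "g = fst \<or> (\<exists>c. g = (\<lambda>_. c))"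
  then show "continuous_on S g \<and> ldiff S g \<and> (\<forall>d. \<exists>h. (h = fst \<or> (\<exists>c. h = (\<lambda>_. c))) \<and> (\<forall>p\<in>S. pd2 d g p = h p))"
  proof
    assume g: "g = fst"
    have "ldiff S g" unfolding ldiff_def g line2_fst_fun by auto
    moreover have "\<exists>h. (h = fst \<or> (\<exists>c. h = (\<lambda>_. c))) \<and> (\<forall>p\<in>S. pd2 d g p = h p)" for d
      by (rule exI[of _ "\<lambda>_. if d then 0 else 1"]) (auto simp: pd2_def g line2_fst_fun)
    ultimately show ?thesis using g continuous_on_fst[OF continuous_on_id] by auto
  next
    assume "\<exists>c. g = (\<lambda>_. c)"
    then show ?thesis by (auto simp: ldiff_def pd2_def)
  qed
qed auto

lemma smooth_snd: "open S \<Longrightarrow> smooth_on2 S snd"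
proof (rule smooth_on2_coind[where P="\<lambda>g. g = snd \<or> (\<exists>c. g = (\<lambda>_. c))"])
  fix g :: "real \<times> real \<Rightarrow> real" assume "g = snd \<or> (\<exists>c. g = (\<lambda>_. c))"
  then show "continuous_on S g \<and> ldiff S g \<and> (\<forall>d. \<exists>h. (h = snd \<or> (\<exists>c. h = (\<lambda>_. c))) \<and> (\<forall>p\<in>S. pd2 d g p = h p))"
  proof
    assume g: "g = snd"
    have "ldiff S g" unfolding ldiff_def g line2_snd_fun by auto
    moreover have "\<exists>h. (h = snd \<or> (\<exists>c. h = (\<lambda>_. c))) \<and> (\<forall>p\<in>S. pd2 d g p = h p)" for d
      by (rule exI[of _ "\<lambda>_. if d then 1 else 0"]) (auto simp: pd2_def g line2_snd_fun)
    ultimately show ?thesis using g continuous_on_snd[OF continuous_on_id] by auto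
  next
    assume "\<exists>c. g = (\<lambda>_. c)"
    then show ?thesis by (auto simp: ldiff_def pd2_def)
  qed
qed auto

lemma smooth_imp: assumes "smooth_on2 S g"
  shows "continuous_on S g" "ldiff S g" "smooth_on2 S (pd2 d g)"
  using assms smooth_on2_iff by blast+

lemma (in bounded_bilinear) smooth_sum_list:
  assumes S: "open S"
  shows "(\<forall>(a,b)\<in>set L. smooth_on2 S a \<and> smooth_on2 S b) \<Longrightarrow>
     smooth_on2 S (\<lambda>x. sum_list (map (\<lambda>(a,b). prod (a x) (b x)) L))"
proof -
  let ?P = "\<lambda>h. \<exists>L. (\<forall>(a,b)\<in>set L. smooth_on2 S a \<and> smooth_on2 S b) \<and>
     h = (\<lambda>x. sum_list (map (\<lambda>(a,b). prod (a x) (b x)) L))"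
  have step: "continuous_on S (\<lambda>x. sum_list (map (\<lambda>(a,b). prod (a x) (b x)) L)) \<and>
     (\<forall>d. \<forall>p\<in>S. ((\<lambda>s. sum_list (map (\<lambda>(a,b). prod (a (line2 d p s)) (b (line2 d p s))) L))
       has_vector_derivative
       sum_list (map (\<lambda>(a,b). prod (a p) (b p)) (concat (map (\<lambda>(a,b). [(a, pd2 d b), (pd2 d a, b)]) L))))
       (at (coord2 d p)))"
    if "\<forall>(a,b)\<in>set L. smooth_on2 S a \<and> smooth_on2 S b" for L
    using that
  proof (induction L)
    case Nil then show ?case by (auto intro: continuous_on_const)
  next
    case (Cons ab L)
    obtain a b where ab: "ab = (a,b)" by fastforce
    have sa: "smooth_on2 S a" and sb: "smooth_on2 S b" using Cons.prems ab by auto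
    have c1: "continuous_on S (\<lambda>x. prod (a x) (b x))"
      using continuous_on[OF smooth_imp(1)[OF sa] smooth_imp(1)[OF sb]] .
    have d1: "((\<lambda>s. prod (a (line2 d p s)) (b (line2 d p s))) has_vector_derivative
        prod (a p) (pd2 d b p) + prod (pd2 d a p) (b p)) (at (coord2 d p))" if "p \<in> S" for d p
      using has_vector_derivative[OF ldiff_hvd[OF smooth_imp(2)[OF sa] that] ldiff_hvd[OF smooth_imp(2)[OF sb] that]]
      by simp
    have "continuous_on S (\<lambda>x. sum_list (map (\<lambda>(a,b). prod (a x) (b x)) (ab#L)))"
      using Cons ab c1 by (auto intro!: continuous_on_add)
    moreover have "((\<lambda>s. sum_list (map (\<lambda>(a,b). prod (a (line2 d p s)) (b (line2 d p s))) (ab#L)))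
       has_vector_derivative
       sum_list (map (\<lambda>(a,b). prod (a p) (b p)) (concat (map (\<lambda>(a,b). [(a, pd2 d b), (pd2 d a, b)]) (ab#L)))))
       (at (coord2 d p))" if "p \<in> S" for d p
    proof -
      have "((\<lambda>s. prod (a (line2 d p s)) (b (line2 d p s)) + sum_list (map (\<lambda>(a,b). prod (a (line2 d p s)) (b (line2 d p s))) L))
       has_vector_derivative
       (prod (a p) (pd2 d b p) + prod (pd2 d a p) (b p)) + sum_list (map (\<lambda>(a,b). prod (a p) (b p)) (concat (map (\<lambda>(a,b). [(a, pd2 d b), (pd2 d a, b)]) L))))
       (at (coord2 d p))"
        using Cons.IH Cons.prems d1[OF that] that by (intro has_vector_derivative_add) auto
      then show ?thesis using ab by (simp add: add.assoc)
    qed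
    ultimately show ?case by blast
  qed
  assume H: "\<forall>(a,b)\<in>set L. smooth_on2 S a \<and> smooth_on2 S b"
  show ?thesis
  proof (rule smooth_on2_coind[where P="?P"])
    show "open S" by fact
    show "?P (\<lambda>x. sum_list (map (\<lambda>(a,b). prod (a x) (b x)) L))" using H by blast
    fix g assume "?P g"
    then obtain L where L: "\<forall>(a,b)\<in>set L. smooth_on2 S a \<and> smooth_on2 S b"
      "g = (\<lambda>x. sum_list (map (\<lambda>(a,b). prod (a x) (b x)) L))" by blast
    note st = step[OF L(1)]
    have "continuous_on S g" using st L by simp
    moreover have "ldiff S g" unfolding ldiff_def L(2)
      using st by (auto simp: case_prod_unfold intro: differentiableI_vector)
    moreover have "\<exists>h. ?P h \<and> (\<forall>p\<in>S. pd2 d g p = h p)" for d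
    proof -
      let ?L = "concat (map (\<lambda>(a,b). [(a, pd2 d b), (pd2 d a, b)]) L)"
      have "?P (\<lambda>x. sum_list (map (\<lambda>(a,b). prod (a x) (b x)) ?L))"
        using L(1) by (intro exI[of _ ?L]) (auto simp: smooth_imp(3))
      moreover have "\<forall>p\<in>S. pd2 d g p = sum_list (map (\<lambda>(a,b). prod (a p) (b p)) ?L)"
        using st L(2) by (auto intro!: pd2_eqI simp: case_prod_unfold)
      ultimately show ?thesis by blast
    qed
    ultimately show "continuous_on S g \<and> ldiff S g \<and> (\<forall>d. \<exists>h. ?P h \<and> (\<forall>p\<in>S. pd2 d g p = h p))"
      by blast
  qed
qed

lemma (in bounded_bilinear) smooth_prod:
  "open S \<Longrightarrow> smooth_on2 S f \<Longrightarrow> smooth_on2 S g \<Longrightarrow> smooth_on2 S (\<lambda>x. prod (f x) (g x))"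
  using smooth_sum_list[of S "[(f,g)]"] by simp

lemma smooth_add:
  assumes "open S" "smooth_on2 S f" "smooth_on2 S g"
  shows "smooth_on2 S (\<lambda>x. f x + g x)"
  using bounded_bilinear.smooth_sum_list[OF bounded_bilinear_scaleR assms(1), of "[(\<lambda>_. 1, f), (\<lambda>_. 1, g)]"]
    assms smooth_const[OF assms(1), of 1] by simp

lemma smooth_scaleR:
  "open S \<Longrightarrow> smooth_on2 S f \<Longrightarrow> smooth_on2 S g \<Longrightarrow> smooth_on2 S (\<lambda>x. f x *\<^sub>R g x)"
  by (rule bounded_bilinear.smooth_prod[OF bounded_bilinear_scaleR])

lemma smooth_mult:
  fixes f g :: "real \<times> real \<Rightarrow> 'a::real_normed_algebra"
  shows "open S \<Longrightarrow> smooth_on2 S f \<Longrightarrow> smooth_on2 S g \<Longrightarrow> smooth_on2 S (\<lambda>x. f x * g x)"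
  by (rule bounded_bilinear.smooth_prod[OF bounded_bilinear_mult])

lemma smooth_inner:
  fixes f g :: "real \<times> real \<Rightarrow> 'a::real_inner"
  shows "open S \<Longrightarrow> smooth_on2 S f \<Longrightarrow> smooth_on2 S g \<Longrightarrow> smooth_on2 S (\<lambda>x. f x \<bullet> g x)"
  by (rule bounded_bilinear.smooth_prod[OF bounded_bilinear_inner])

lemma smooth_uminus:
  assumes "open S" "smooth_on2 S f"
  shows "smooth_on2 S (\<lambda>x. - f x)"
  using smooth_scaleR[OF assms(1) smooth_const[OF assms(1), of "-1"] assms(2)] by simp

lemma smooth_diff:
  assumes "open S" "smooth_on2 S f" "smooth_on2 S g"
  shows "smooth_on2 S (\<lambda>x. f x - g x)"
  using smooth_add[OF assms(1,2) smooth_uminus[OF assms(1,3)]] by simp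


lemma smooth_has_derivative:
  fixes g :: "real \<times> real \<Rightarrow> 'b::real_normed_vector"
  assumes S: "open S" and sg: "smooth_on2 S g" and p: "p \<in> S"
  shows "(g has_derivative (\<lambda>(a,b). a *\<^sub>R pd2 False g p + b *\<^sub>R pd2 True g p)) (at p)"
proof -
  obtain x0 y0 where p0: "p = (x0, y0)" by fastforce
  obtain r where r: "r > 0" "ball p r \<subseteq> S" using S p openE by blast
  define X where "X = ball x0 (r/2)"
  define Y where "Y = ball y0 (r/2)"
  have XY: "X \<times> Y \<subseteq> S"
  proof
    fix q assume "q \<in> X \<times> Y"
    then obtain x y where q: "q = (x,y)" "dist x0 x < r/2" "dist y0 y < r/2"
      by (auto simp: X_def Y_def)
    have "dist p q \<le> dist x0 x + dist y0 y"
      using q p0 by (simp add: dist_Pair_Pair) (metis sqrt_sum_squares_le_sum_abs abs_of_nonneg zero_le_dist)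
    then have "q \<in> ball p r" using q by simp
    then show "q \<in> S" using r by blast
  qed
  have ld: "ldiff S g" and cg1: "continuous_on S (pd2 True g)"
    using smooth_imp[OF sg] smooth_imp(1)[OF smooth_imp(3)[OF sg]] by auto
  have fx: "((\<lambda>x. g (x, y0)) has_derivative (\<lambda>a. a *\<^sub>R pd2 False g p)) (at x0 within X)"
  proof -
    have "((\<lambda>s. g (line2 False p s)) has_vector_derivative pd2 False g p) (at (coord2 False p))"
      by (rule ldiff_hvd[OF ld p])
    then show ?thesis using p0
      by (auto simp: line2_def coord2_def has_vector_derivative_def intro: has_derivative_at_withinI)
  qed
  have fy: "((\<lambda>y. g (x, y)) has_derivative blinfun_apply (blinfun_scaleR_left (pd2 True g (x,y)))) (at y within Y)"
    if "x \<in> X" "y \<in> Y" for x y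
  proof -
    have "(x,y) \<in> S" using XY that by blast
    from ldiff_hvd[OF ld this, of True]
    show ?thesis
      by (auto simp: line2_def coord2_def has_vector_derivative_def intro: has_derivative_at_withinI)
  qed
  have cont: "continuous (at (x0, y0) within X \<times> Y) (\<lambda>(x, y). blinfun_scaleR_left (pd2 True g (x,y)))"
  proof -
    have "continuous (at (x0,y0) within X \<times> Y) (pd2 True g)"
      using cg1 XY p p0 continuous_on_subset S
      by (metis continuous_on_eq_continuous_within continuous_within_subset mem_Times_iff
          centre_in_ball half_gt_zero r(1) X_def Y_def continuous_on_interior interior_open)
    then have "continuous (at (x0,y0) within X \<times> Y) (\<lambda>q. blinfun_scaleR_left (pd2 True g q))"
      by (rule bounded_linear.continuous[OF bounded_linear_blinfun_scaleR_left])
    then show ?thesis by (simp add: case_prod_unfold)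
  qed
  have "((\<lambda>(x, y). g (x, y)) has_derivative (\<lambda>(tx, ty). tx *\<^sub>R pd2 False g p + blinfun_apply (blinfun_scaleR_left (pd2 True g (x0,y0))) ty)) (at (x0, y0) within X \<times> Y)"
    by (rule has_derivative_partialsI[OF fx fy cont]) (auto simp: Y_def r)
  moreover have "at (x0,y0) within X \<times> Y = at (x0,y0)"
    by (rule at_within_open) (auto simp: X_def Y_def r open_Times)
  ultimately show ?thesis using p0 by (simp add: case_prod_unfold)
qed


lemma chain_vec:
  fixes K :: "real \<times> real \<Rightarrow> 'b::real_normed_vector"
  assumes "(K has_derivative (\<lambda>(a,b). a *\<^sub>R A + b *\<^sub>R B)) (at (p s0))"
    "(p has_vector_derivative (u,v)) (at s0)"
  shows "((\<lambda>s. K (p s)) has_vector_derivative (u *\<^sub>R A + v *\<^sub>R B)) (at s0)"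
proof -
  have "((K \<circ> p) has_derivative ((\<lambda>(a,b). a *\<^sub>R A + b *\<^sub>R B) \<circ> (\<lambda>t. t *\<^sub>R (u,v)))) (at s0)"
    using diff_chain_at[OF assms(2)[unfolded has_vector_derivative_def] assms(1)] .
  moreover have "((\<lambda>(a,b). a *\<^sub>R A + b *\<^sub>R B) \<circ> (\<lambda>t. t *\<^sub>R (u,v))) = (\<lambda>t. t *\<^sub>R (u *\<^sub>R A + v *\<^sub>R B))"
    by (auto simp: fun_eq_iff scaleR_add_right)
  ultimately show ?thesis by (simp add: has_vector_derivative_def comp_def)
qed

lemma smooth_implicit:
  fixes \<phi> :: "real \<times> real \<Rightarrow> real" and K :: "real \<times> real \<Rightarrow> 'b::real_normed_vector"
  assumes S: "open S" and cont: "continuous_on S \<phi>"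
    and inS: "\<And>x. x \<in> S \<Longrightarrow> (\<phi> x, snd x) \<in> S"
    and der: "\<And>d x. x \<in> S \<Longrightarrow> ((\<lambda>s. \<phi> (line2 d x s)) has_vector_derivative H d (\<phi> x, snd x)) (at (coord2 d x))"
    and sH: "\<And>d. smooth_on2 S (H d)"
    and sK: "smooth_on2 S K"
  shows "smooth_on2 S (\<lambda>x. K (\<phi> x, snd x))"
proof (rule smooth_on2_coind[where P="\<lambda>h. \<exists>K. smooth_on2 S K \<and> h = (\<lambda>x. K (\<phi> x, snd x))"])
  show "open S" by fact
  show "\<exists>K'. smooth_on2 S K' \<and> (\<lambda>x. K (\<phi> x, snd x)) = (\<lambda>x. K' (\<phi> x, snd x))" using sK by blast
  fix h :: "real \<times> real \<Rightarrow> 'b" assume "\<exists>K. smooth_on2 S K \<and> h = (\<lambda>x. K (\<phi> x, snd x))"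
  then obtain K where K: "smooth_on2 S K" "h = (\<lambda>x. K (\<phi> x, snd x))" by blast
  have cp: "continuous_on S (\<lambda>x. (\<phi> x, snd x))"
    by (intro continuous_intros cont)
  have ch: "continuous_on S h" unfolding K(2)
    using continuous_on_compose2[OF smooth_imp(1)[OF K(1)] cp] inS by blast
  define K' where "K' d = (\<lambda>q. H d q *\<^sub>R pd2 False K q + (if d then 1 else 0) *\<^sub>R pd2 True K q)" for d
  have sK': "smooth_on2 S (K' d)" for d
    unfolding K'_def
    by (intro smooth_add smooth_scaleR S sH smooth_const smooth_imp(3)[OF K(1)])
  have dh: "((\<lambda>s. h (line2 d x s)) has_vector_derivative K' d (\<phi> x, snd x)) (at (coord2 d x))"
    if x: "x \<in> S" for d x
  proof -
    have pd: "((\<lambda>s. (\<phi> (line2 d x s), snd (line2 d x s))) has_vector_derivative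
          (H d (\<phi> x, snd x), if d then 1 else 0)) (at (coord2 d x))"
    proof (rule has_vector_derivative_Pair)
      show "((\<lambda>s. \<phi> (line2 d x s)) has_vector_derivative H d (\<phi> x, snd x)) (at (coord2 d x))"
        by (rule der[OF x])
      show "((\<lambda>s. snd (line2 d x s)) has_vector_derivative (if d then 1 else 0)) (at (coord2 d x))"
        by (cases d) (auto simp: line2_snd_fun)
    qed
    have kd: "(K has_derivative (\<lambda>(a,b). a *\<^sub>R pd2 False K (\<phi> x, snd x) + b *\<^sub>R pd2 True K (\<phi> x, snd x)))
        (at ((\<lambda>s. (\<phi> (line2 d x s), snd (line2 d x s))) (coord2 d x)))"
      using smooth_has_derivative[OF S K(1) inS[OF x]] by simp
    show ?thesis using chain_vec[OF kd pd] unfolding K(2) K'_def by simp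
  qed
  have "ldiff S h" unfolding ldiff_def using dh differentiableI_vector by blast
  moreover have "\<exists>h'. (\<exists>K. smooth_on2 S K \<and> h' = (\<lambda>x. K (\<phi> x, snd x))) \<and> (\<forall>p\<in>S. pd2 d h p = h' p)" for d
    using dh pd2_eqI sK' by blast
  ultimately show "continuous_on S h \<and> ldiff S h \<and>
      (\<forall>d. \<exists>h'. (\<exists>K. smooth_on2 S K \<and> h' = (\<lambda>x. K (\<phi> x, snd x))) \<and> (\<forall>p\<in>S. pd2 d h p = h' p))"
    using ch by blast
qed


lemma ldiff_real_deriv:
  fixes g :: "real \<times> real \<Rightarrow> real"
  assumes "ldiff S g" "p \<in> S"
  shows "((\<lambda>s. g (line2 d p s)) has_real_derivative pd2 d g p) (at (coord2 d p))"
  using ldiff_hvd[OF assms] by (simp add: has_real_derivative_iff_has_vector_derivative)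

lemma smooth_inverse:
  fixes f :: "real \<times> real \<Rightarrow> real"
  assumes S: "open S" and sf: "smooth_on2 S f" and nz: "\<And>x. x \<in> S \<Longrightarrow> f x \<noteq> 0"
  shows "smooth_on2 S (\<lambda>x. 1 / f x)"
proof -
  define g where "g x = 1 / f x" for x
  let ?F = "\<lambda>L x. sum_list (map (\<lambda>(a,k). a x * g x ^ k) L)"
  let ?P = "\<lambda>h. \<exists>L. (\<forall>(a,k)\<in>set L. smooth_on2 S a) \<and> h = ?F L"
  let ?D = "\<lambda>d L. concat (map (\<lambda>(a,k). [(pd2 d a, k), (\<lambda>x. - real k * a x * pd2 d f x, Suc k)]) L)"
  have cg: "continuous_on S g" unfolding g_def
    using smooth_imp(1)[OF sf] nz by (auto intro!: continuous_intros)
  have step: "continuous_on S (?F L) \<and>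
     (\<forall>d. \<forall>p\<in>S. ((\<lambda>s. ?F L (line2 d p s)) has_real_derivative ?F (?D d L) p) (at (coord2 d p)))"
    if "\<forall>(a,k)\<in>set L. smooth_on2 S a" for L
    using that
  proof (induction L)
    case Nil then show ?case by (auto intro: continuous_on_const)
  next
    case (Cons ak L)
    obtain a k where ak: "ak = (a,k)" by fastforce
    have sa: "smooth_on2 S a" using Cons.prems ak by auto
    have c1: "continuous_on S (\<lambda>x. a x * g x ^ k)"
      using smooth_imp(1)[OF sa] cg by (auto intro!: continuous_intros)
    have d1: "((\<lambda>s. a (line2 d p s) * g (line2 d p s) ^ k) has_real_derivative
        pd2 d a p * g p ^ k + (- real k * a p * pd2 d f p) * g p ^ Suc k) (at (coord2 d p))"
      if p: "p \<in> S" for d p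
    proof -
      have fd: "((\<lambda>s. f (line2 d p s)) has_real_derivative pd2 d f p) (at (coord2 d p))"
        by (rule ldiff_real_deriv[OF smooth_imp(2)[OF sf] p])
      have ad: "((\<lambda>s. a (line2 d p s)) has_real_derivative pd2 d a p) (at (coord2 d p))"
        by (rule ldiff_real_deriv[OF smooth_imp(2)[OF sa] p])
      have fz: "f p \<noteq> 0" using nz p by blast
      have gd: "((\<lambda>s. g (line2 d p s)) has_real_derivative - pd2 d f p * g p ^ 2) (at (coord2 d p))"
        unfolding g_def using DERIV_inverse_fun[OF fd, of] fz
        by (simp add: divide_inverse power2_eq_square power_inverse)
      have "((\<lambda>s. a (line2 d p s) * g (line2 d p s) ^ k) has_real_derivative
          pd2 d a p * g p ^ k + a p * (real k * ((- pd2 d f p * g p ^ 2) * g p ^ (k - Suc 0)))) (at (coord2 d p))"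
        using DERIV_mult[OF ad DERIV_power[OF gd, of k]] by (simp add: algebra_simps)
      moreover have "a p * (real k * ((- pd2 d f p * g p ^ 2) * g p ^ (k - Suc 0))) = (- real k * a p * pd2 d f p) * g p ^ Suc k"
        by (cases k) (auto simp: power2_eq_square algebra_simps)
      ultimately show ?thesis by metis
    qed
    have "continuous_on S (?F (ak#L))"
      using Cons ak c1 by (auto intro!: continuous_on_add)
    moreover have "((\<lambda>s. ?F (ak#L) (line2 d p s)) has_real_derivative ?F (?D d (ak#L)) p) (at (coord2 d p))"
      if "p \<in> S" for d p
    proof -
      have "((\<lambda>s. a (line2 d p s) * g (line2 d p s) ^ k + ?F L (line2 d p s)) has_real_derivative
          (pd2 d a p * g p ^ k + (- real k * a p * pd2 d f p) * g p ^ Suc k) + ?F (?D d L) p) (at (coord2 d p))"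
        using Cons.IH Cons.prems d1[OF that] that by (intro DERIV_add) auto
      then show ?thesis using ak by (simp add: algebra_simps)
    qed
    ultimately show ?case by blast
  qed
  have "smooth_on2 S g"
  proof (rule smooth_on2_coind[where P="?P"])
    show "open S" by fact
    show "?P g" by (rule exI[of _ "[(\<lambda>_. 1, 1)]"]) (auto simp: S smooth_const)
    fix h assume "?P h"
    then obtain L where L: "\<forall>(a,k)\<in>set L. smooth_on2 S a" "h = ?F L" by blast
    note st = step[OF L(1)]
    have "continuous_on S h" using st L by simp
    moreover have "ldiff S h" unfolding ldiff_def L(2)
      using st by (auto simp: has_real_derivative_iff_has_vector_derivative intro: differentiableI_vector)
    moreover have "\<exists>h'. ?P h' \<and> (\<forall>p\<in>S. pd2 d h p = h' p)" for d
    proof -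
      have "?P (?F (?D d L))"
        using L(1) by (intro exI[of _ "?D d L"])
          (auto simp: smooth_imp(3) S sf intro!: smooth_mult smooth_const smooth_uminus)
      moreover have "\<forall>p\<in>S. pd2 d h p = ?F (?D d L) p"
        using st L(2) by (auto intro!: pd2_eqI simp: has_real_derivative_iff_has_vector_derivative)
      ultimately show ?thesis by blast
    qed
    ultimately show "continuous_on S h \<and> ldiff S h \<and> (\<forall>d. \<exists>h'. ?P h' \<and> (\<forall>p\<in>S. pd2 d h p = h' p))"
      by blast
  qed
  then show ?thesis unfolding g_def[abs_def] .
qed


lemma smooth_from_partials:
  assumes S: "open S" and cg: "continuous_on S g"
    and der: "\<And>d x. x \<in> S \<Longrightarrow> ((\<lambda>s. g (line2 d x s)) has_vector_derivative G d x) (at (coord2 d x))"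
    and sG: "\<And>d. smooth_on2 S (G d)"
  shows "smooth_on2 S g"
proof (rule smooth_on2_coind[where P="\<lambda>h. h = g \<or> smooth_on2 S h"])
  fix h assume "h = g \<or> smooth_on2 S h"
  then show "continuous_on S h \<and> ldiff S h \<and> (\<forall>d. \<exists>h'. (h' = g \<or> smooth_on2 S h') \<and> (\<forall>p\<in>S. pd2 d h p = h' p))"
  proof
    assume h: "h = g"
    have "ldiff S g" unfolding ldiff_def using der differentiableI_vector by blast
    moreover have "\<forall>p\<in>S. pd2 d g p = G d p" for d using der pd2_eqI by blast
    ultimately show ?thesis unfolding h using cg sG by blast
  next
    assume sh: "smooth_on2 S h"
    have "\<forall>d. \<exists>h'. (h' = g \<or> smooth_on2 S h') \<and> (\<forall>p\<in>S. pd2 d h p = h' p)"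
      using smooth_imp(3)[OF sh] by blast
    then show ?thesis using smooth_imp(1,2)[OF sh] by blast
  qed
qed (use S in auto)

lemma ldiff_False:
  fixes f :: "real \<times> real \<Rightarrow> real"
  assumes "ldiff S f" "(s,t) \<in> S"
  shows "((\<lambda>s'. f (s',t)) has_real_derivative pd2 False f (s,t)) (at s)"
  using ldiff_real_deriv[OF assms, of False] by (simp add: line2_def coord2_def)

lemma ldiff_True:
  fixes f :: "real \<times> real \<Rightarrow> real"
  assumes "ldiff S f" "(s,t) \<in> S"
  shows "((\<lambda>t'. f (s,t')) has_real_derivative pd2 True f (s,t)) (at t)"
  using ldiff_real_deriv[OF assms, of True] by (simp add: line2_def coord2_def)

lemma schwarz_real:
  fixes f :: "real \<times> real \<Rightarrow> real"
  assumes S: "open S" and sf: "smooth_on2 S f" and p: "p \<in> S"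
  shows "pd2 True (pd2 False f) p = pd2 False (pd2 True f) p"
proof -
  obtain x0 y0 where p0: "p = (x0,y0)" by fastforce
  obtain r where r: "r > 0" "ball p r \<subseteq> S" using S p openE by blast
  let ?fx = "pd2 False f" and ?fy = "pd2 True f"
  let ?fxy = "pd2 True ?fx" and ?fyx = "pd2 False ?fy"
  have ldf: "ldiff S f" and ldx: "ldiff S ?fx" and ldy: "ldiff S ?fy"
    using smooth_imp[OF sf] smooth_imp(2)[OF smooth_imp(3)[OF sf]] by auto
  have cxy: "continuous_on S ?fxy" and cyx: "continuous_on S ?fyx"
    using smooth_imp(1)[OF smooth_imp(3)[OF smooth_imp(3)[OF sf]]] by auto
  have box: "(s,t) \<in> S" if "0 < h" "h < r/2" "x0 \<le> s" "s \<le> x0 + h" "y0 \<le> t" "t \<le> y0 + h" for h s t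
  proof -
    have "dist p (s,t) \<le> dist x0 s + dist y0 t"
      using p0 by (simp add: dist_Pair_Pair) (metis sqrt_sum_squares_le_sum_abs abs_of_nonneg zero_le_dist)
    also have "\<dots> \<le> 2*h" using that by (simp add: dist_real_def)
    finally have "(s,t) \<in> ball p r" using that by simp
    then show ?thesis using r by blast
  qed
  have boxd: "dist (s,t) p \<le> 2*h" if "x0 \<le> s" "s \<le> x0 + h" "y0 \<le> t" "t \<le> y0 + h" for h s t
  proof -
    have "dist (s,t) p \<le> dist s x0 + dist t y0"
      using p0 by (simp add: dist_Pair_Pair) (metis sqrt_sum_squares_le_sum_abs abs_of_nonneg zero_le_dist)
    also have "\<dots> \<le> 2*h" using that by (simp add: dist_real_def)
    finally show ?thesis .
  qed
  define \<Delta> where "\<Delta> h = f (x0+h, y0+h) - f (x0+h, y0) - f (x0, y0+h) + f (x0, y0)" for h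
  have A: "\<exists>q. dist q p \<le> 2*h \<and> \<Delta> h = h * h * ?fxy q" if h: "0 < h" "h < r/2" for h
  proof -
    have "\<exists>z. x0 < z \<and> z < x0 + h \<and> (f (x0+h, y0+h) - f (x0+h, y0)) - (f (x0, y0+h) - f (x0, y0))
        = ((x0+h) - x0) * (?fx (z, y0+h) - ?fx (z, y0))"
      by (rule MVT2) (use h box in \<open>auto intro!: DERIV_diff ldiff_False[OF ldf]\<close>)
    then obtain z where z: "x0 < z" "z < x0 + h" "\<Delta> h = h * (?fx (z, y0+h) - ?fx (z, y0))"
      by (auto simp: \<Delta>_def algebra_simps)
    have "\<exists>w. y0 < w \<and> w < y0 + h \<and> ?fx (z, y0+h) - ?fx (z, y0) = ((y0+h) - y0) * ?fxy (z, w)"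
    proof (rule MVT2)
      show "y0 < y0 + h" using h by simp
      fix t assume "y0 \<le> t" "t \<le> y0 + h"
      then have "(z,t) \<in> S" using box[of h z t] h z by auto
      then show "((\<lambda>t. ?fx (z, t)) has_real_derivative ?fxy (z, t)) (at t)" by (rule ldiff_True[OF ldx])
    qed
    then obtain w where w: "y0 < w" "w < y0 + h" "?fx (z, y0+h) - ?fx (z, y0) = h * ?fxy (z, w)" by auto
    show ?thesis using z w boxd[of z h w] by (intro exI[of _ "(z,w)"]) auto
  qed
  have B: "\<exists>q. dist q p \<le> 2*h \<and> \<Delta> h = h * h * ?fyx q" if h: "0 < h" "h < r/2" for h
  proof -
    have "\<exists>w. y0 < w \<and> w < y0 + h \<and> (f (x0+h, y0+h) - f (x0, y0+h)) - (f (x0+h, y0) - f (x0, y0))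
        = ((y0+h) - y0) * (?fy (x0+h, w) - ?fy (x0, w))"
      by (rule MVT2) (use h box in \<open>auto intro!: DERIV_diff ldiff_True[OF ldf]\<close>)
    then obtain w where w: "y0 < w" "w < y0 + h" "\<Delta> h = h * (?fy (x0+h, w) - ?fy (x0, w))"
      by (auto simp: \<Delta>_def algebra_simps)
    have "\<exists>z. x0 < z \<and> z < x0 + h \<and> ?fy (x0+h, w) - ?fy (x0, w) = ((x0+h) - x0) * ?fyx (z, w)"
    proof (rule MVT2)
      show "x0 < x0 + h" using h by simp
      fix s assume "x0 \<le> s" "s \<le> x0 + h"
      then have "(s,w) \<in> S" using box[of h s w] h w by auto
      then show "((\<lambda>s. ?fy (s, w)) has_real_derivative ?fyx (s, w)) (at s)" by (rule ldiff_False[OF ldy])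
    qed
    then obtain z where z: "x0 < z" "z < x0 + h" "?fy (x0+h, w) - ?fy (x0, w) = h * ?fyx (z, w)" by auto
    show ?thesis using z w boxd[of z h w] by (intro exI[of _ "(z,w)"]) auto
  qed
  show ?thesis
  proof (rule ccontr)
    assume ne: "?fxy p \<noteq> ?fyx p"
    define e where "e = \<bar>?fxy p - ?fyx p\<bar> / 3"
    have e: "e > 0" using ne by (simp add: e_def)
    have "continuous (at p) ?fxy" "continuous (at p) ?fyx"
      using cxy cyx S p by (auto simp: continuous_on_eq_continuous_at)
    then obtain d1 d2 where d1: "d1 > 0" "\<And>q. dist q p < d1 \<Longrightarrow> dist (?fxy q) (?fxy p) < e"
      and d2: "d2 > 0" "\<And>q. dist q p < d2 \<Longrightarrow> dist (?fyx q) (?fyx p) < e"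
      using e unfolding continuous_at_eps_delta by metis
    define h where "h = min (r/4) (min d1 d2) / 4"
    have h: "0 < h" "h < r/2" "2*h < d1" "2*h < d2" using r d1 d2 by (auto simp: h_def)
    obtain q1 where q1: "dist q1 p \<le> 2*h" "\<Delta> h = h * h * ?fxy q1" using A h by blast
    obtain q2 where q2: "dist q2 p \<le> 2*h" "\<Delta> h = h * h * ?fyx q2" using B h by blast
    have "?fxy q1 = ?fyx q2" using q1 q2 h by simp
    moreover have "dist (?fxy q1) (?fxy p) < e" using d1(2)[of q1] q1 h by linarith
    moreover have "dist (?fyx q2) (?fyx p) < e" using d2(2)[of q2] q2 h by linarith
    moreover have "\<And>A B Q::real. \<bar>Q-A\<bar>*3 < \<bar>A-B\<bar> \<Longrightarrow> \<bar>Q-B\<bar>*3 < \<bar>A-B\<bar> \<Longrightarrow> False" by (auto simp: abs_if split: if_splits)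
    ultimately show False using e_def e by (simp add: dist_real_def) blast
  qed
qed


lemma pd2_inner_const:
  fixes g :: "real \<times> real \<Rightarrow> 'b::real_inner"
  assumes "ldiff S g" "p \<in> S"
  shows "pd2 d (\<lambda>x. g x \<bullet> c) p = pd2 d g p \<bullet> c"
proof (rule pd2_eqI)
  show "((\<lambda>s. g (line2 d p s) \<bullet> c) has_vector_derivative pd2 d g p \<bullet> c) (at (coord2 d p))"
    using bounded_linear.has_vector_derivative[OF bounded_linear_inner_left ldiff_hvd[OF assms]] .
qed

lemma schwarz:
  fixes g :: "real \<times> real \<Rightarrow> 'b::real_inner"
  assumes S: "open S" and sg: "smooth_on2 S g" and p: "p \<in> S"
  shows "pd2 True (pd2 False g) p = pd2 False (pd2 True g) p"
proof -
  have key: "pd2 True (pd2 False g) p \<bullet> c = pd2 False (pd2 True g) p \<bullet> c" for c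
  proof -
    let ?f = "\<lambda>x. g x \<bullet> c"
    have sf: "smooth_on2 S ?f" by (intro smooth_inner S sg smooth_const)
    have l1: "\<And>q. q \<in> S \<Longrightarrow> pd2 False ?f q = pd2 False g q \<bullet> c"
      and l2: "\<And>q. q \<in> S \<Longrightarrow> pd2 True ?f q = pd2 True g q \<bullet> c"
      using pd2_inner_const[OF smooth_imp(2)[OF sg]] by auto
    have "pd2 True (pd2 False ?f) p = pd2 True (\<lambda>q. pd2 False g q \<bullet> c) p"
      by (rule pd2_local[OF S p l1])
    also have "\<dots> = pd2 True (pd2 False g) p \<bullet> c"
      by (rule pd2_inner_const[OF smooth_imp(2)[OF smooth_imp(3)[OF sg]] p])
    finally have e1: "pd2 True (pd2 False ?f) p = pd2 True (pd2 False g) p \<bullet> c" .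
    have "pd2 False (pd2 True ?f) p = pd2 False (\<lambda>q. pd2 True g q \<bullet> c) p"
      by (rule pd2_local[OF S p l2])
    also have "\<dots> = pd2 False (pd2 True g) p \<bullet> c"
      by (rule pd2_inner_const[OF smooth_imp(2)[OF smooth_imp(3)[OF sg]] p])
    finally have e2: "pd2 False (pd2 True ?f) p = pd2 False (pd2 True g) p \<bullet> c" .
    show ?thesis using schwarz_real[OF S sf p] e1 e2 by simp
  qed
  have "(pd2 True (pd2 False g) p - pd2 False (pd2 True g) p) \<bullet> (pd2 True (pd2 False g) p - pd2 False (pd2 True g) p) = 0"
    using key by (simp add: inner_diff_left)
  then show ?thesis by simp
qed


lemma decomp_unit:
  fixes z w :: complex
  assumes "norm w = 1"
  shows "z = (z \<bullet> w) *\<^sub>R w + (z \<bullet> (\<i> * w)) *\<^sub>R (\<i> * w)"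
proof -
  have n: "Re w * Re w + Im w * Im w = 1"
    using assms by (simp add: norm_complex_def power2_eq_square)
  have a: "Re z = Re z * (Re w * Re w + Im w * Im w)" "Im z = Im z * (Re w * Re w + Im w * Im w)"
    using n by simp_all
  show ?thesis
    apply (simp add: complex_eq_iff inner_complex_def)
    apply (intro conjI)
     apply (subst a(1)) apply (simp add: algebra_simps)
    apply (subst a(2)) apply (simp add: algebra_simps)
    done
qed

lemma lift_deriv:
  fixes f :: "real \<Rightarrow> complex" and \<theta> :: "real \<Rightarrow> real"
  assumes U: "open U" "s0 \<in> U" and fc: "\<And>s. s \<in> U \<Longrightarrow> f s = cis (\<theta> s)"
    and ct: "continuous (at s0) \<theta>" and fd: "(f has_vector_derivative f') (at s0)"
  shows "(\<theta> has_real_derivative (f' \<bullet> (\<i> * f s0))) (at s0)"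
proof -
  obtain e1 where e1: "e1 > 0" "ball s0 e1 \<subseteq> U" using U openE by blast
  obtain e2 where e2: "e2 > 0" "\<And>s. dist s s0 < e2 \<Longrightarrow> dist (\<theta> s) (\<theta> s0) < pi/2"
    using ct unfolding continuous_at_eps_delta by (metis pi_half_gt_zero)
  define e where "e = min e1 e2"
  define c where "c = f s0"
  have c: "c = cis (\<theta> s0)" using fc U by (simp add: c_def)
  have eq: "\<theta> s = \<theta> s0 + Im (Ln (f s * cnj c))" if "s \<in> ball s0 e" for s
  proof -
    have sU: "s \<in> U" using that e1 by (auto simp: e_def)
    have d: "\<bar>\<theta> s - \<theta> s0\<bar> < pi/2" using e2(2)[of s] that by (auto simp: e_def dist_real_def dist_commute)
    have fcs: "f s * cnj c = cis (\<theta> s - \<theta> s0)"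
      using fc[OF sU] c by (simp add: cis_cnj cis_mult)
    have d2: "- (pi/2) < \<theta> s - \<theta> s0" "\<theta> s - \<theta> s0 < pi/2" using d by (simp_all only: abs_less_iff) linarith+
    have "\<theta> s - \<theta> s0 \<in> {-pi<..pi}" using d2 pi_gt_zero by simp
    then show ?thesis using fcs by (simp add: Ln_cis)
  qed
  have one: "f s0 * cnj c = 1"
    using c by (simp add: c_def cis_cnj cis_mult)
  have "((\<lambda>s. f s * cnj c) has_vector_derivative f' * cnj c) (at s0)"
    using fd by (auto intro!: derivative_eq_intros)
  then have "((Ln \<circ> (\<lambda>s. f s * cnj c)) has_vector_derivative f' * cnj c * inverse 1) (at s0)"
    by (rule field_vector_diff_chain_at) (use has_field_derivative_Ln[of 1] in \<open>simp add: one\<close>)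
  then have "((\<lambda>s. Im (Ln (f s * cnj c))) has_vector_derivative Im (f' * cnj c)) (at s0)"
    using bounded_linear.has_vector_derivative[OF bounded_linear_Im] unfolding comp_def
    by (metis mult.right_neutral inverse_1)
  then have "((\<lambda>s. \<theta> s0 + Im (Ln (f s * cnj c))) has_real_derivative Im (f' * cnj c)) (at s0)"
    by (auto simp: has_real_derivative_iff_has_vector_derivative intro!: derivative_eq_intros)
  then have "(\<theta> has_real_derivative Im (f' * cnj c)) (at s0)"
  proof (rule has_field_derivative_transform_within_open[where S="ball s0 e"])
    show "open (ball s0 e)" by simp
    show "s0 \<in> ball s0 e" using e1 e2 by (simp add: e_def)
    fix x assume "x \<in> ball s0 e"
    then show "\<theta> s0 + Im (Ln (f x * cnj c)) = \<theta> x" using eq by simp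
  qed
  moreover have "Im (f' * cnj c) = f' \<bullet> (\<i> * f s0)"
    by (simp add: c_def inner_complex_def algebra_simps)
  ultimately show ?thesis by simp
qed


lemma du_pd2: "du f u t = pd2 False (\<lambda>(u,t). f u t) (u,t)"
  by (simp add: du_def pd2_def line2_def coord2_def)
lemma dt_pd2: "dt f u t = pd2 True (\<lambda>(u,t). f u t) (u,t)"
  by (simp add: dt_def pd2_def line2_def coord2_def)

lemma cis_eq_int: "cis a = cis b \<Longrightarrow> \<exists>m::int. a = b + 2 * pi * m"
proof -
  assume "cis a = cis b"
  then have "exp (\<i> * complex_of_real a) = exp (\<i> * complex_of_real b)" by (simp add: cis_conv_exp)
  then obtain m :: int where m: "\<i> * complex_of_real a = \<i> * complex_of_real b + (of_int (2 * m) * pi) * \<i>"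
    using exp_eq by blast
  have "Im (\<i> * complex_of_real a) = Im (\<i> * complex_of_real b + (of_int (2 * m) * pi) * \<i>)"
    using m by simp
  then have "a = b + 2 * pi * m" by simp
  then show ?thesis by blast
qed


locale icf_setup =
  fixes X \<nu> :: "real \<Rightarrow> real \<Rightarrow> complex"
  assumes icf: "inverse_curvature_flow X \<nu>"
    and ell0: "\<forall>u. leg_ell \<nu> u 0 > 0"
begin

definition "S0 = (UNIV \<times> {0..} :: (real \<times> real) set)"
definition "S = (UNIV \<times> {0<..} :: (real \<times> real) set)"
definition "Nu = (\<lambda>(u,t). \<nu> u t)"
definition "Xf = (\<lambda>(u,t). X u t)"

lemma S_open: "open S" by (simp add: S_def open_Times)
lemma S_sub: "S \<subseteq> S0" by (auto simp: S_def S0_def)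
lemma S0_convex: "convex S0" by (simp add: S0_def convex_Times)
lemma mem_S[simp]: "(u,t) \<in> S \<longleftrightarrow> t > 0" by (simp add: S_def)
lemma mem_S0[simp]: "(u,t) \<in> S0 \<longleftrightarrow> t \<ge> 0" by (simp add: S0_def)
lemma Nu_app[simp]: "Nu (u,t) = \<nu> u t" by (simp add: Nu_def)
lemma Xf_app[simp]: "Xf (u,t) = X u t" by (simp add: Xf_def)

lemma lf: "legendre_flow X \<nu>" using icf by (simp add: inverse_curvature_flow_def)
lemma smoothNu: "smooth_on2 S Nu" using icf by (simp add: inverse_curvature_flow_def smooth_flow_def S_def Nu_def)
lemma smoothXf: "smooth_on2 S Xf" using icf by (simp add: inverse_curvature_flow_def smooth_flow_def S_def Xf_def)
lemma c01Nu: "C0C1_flow \<nu>" using lf by (simp add: legendre_flow_def)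
lemma c01Xf: "C0C1_flow X" using lf by (simp add: legendre_flow_def)
lemma contNu: "continuous_on S0 Nu" using c01Nu by (simp add: C0C1_flow_def S0_def Nu_def)
lemma unit: "t \<ge> 0 \<Longrightarrow> norm (\<nu> u t) = 1" using lf by (simp add: legendre_flow_def)
lemma perNu: "t \<ge> 0 \<Longrightarrow> \<nu> (u + 2*pi) t = \<nu> u t" using lf by (simp add: legendre_flow_def periodic_flow_def)
lemma perX: "t \<ge> 0 \<Longrightarrow> X (u + 2*pi) t = X u t" using lf by (simp add: legendre_flow_def periodic_flow_def)
lemma legX: "t \<ge> 0 \<Longrightarrow> du X u t \<bullet> \<nu> u t = 0" using lf by (simp add: legendre_flow_def)
lemma ell_pos: "t \<ge> 0 \<Longrightarrow> leg_ell \<nu> u t > 0"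
  using icf ell0 by (cases "t = 0") (auto simp: inverse_curvature_flow_def)
lemma normalv: "t > 0 \<Longrightarrow> dt X u t \<bullet> \<nu> u t = leg_beta X \<nu> u t / leg_ell \<nu> u t"
  using icf by (simp add: inverse_curvature_flow_def)
lemma nu_du: "t \<ge> 0 \<Longrightarrow> ((\<lambda>s. \<nu> s t) has_vector_derivative du \<nu> u t) (at u)"
  using c01Nu unfolding C0C1_flow_def du_def using vector_derivative_works by blast
lemma X_du: "t \<ge> 0 \<Longrightarrow> ((\<lambda>s. X s t) has_vector_derivative du X u t) (at u)"
  using c01Xf unfolding C0C1_flow_def du_def using vector_derivative_works by blast
lemma nu_dt: "t > 0 \<Longrightarrow> ((\<lambda>s. \<nu> u s) has_vector_derivative dt \<nu> u t) (at t)"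
  using ldiff_hvd[OF smooth_imp(2)[OF smoothNu], of "(u,t)" True]
  by (simp add: dt_pd2 line2_def coord2_def Nu_def[symmetric])
lemma X_dt: "t > 0 \<Longrightarrow> ((\<lambda>s. X u s) has_vector_derivative dt X u t) (at t)"
  using ldiff_hvd[OF smooth_imp(2)[OF smoothXf], of "(u,t)" True]
  by (simp add: dt_pd2 line2_def coord2_def Xf_def[symmetric])

lemma lift_exists: "\<exists>\<psi>. continuous_on S0 \<psi> \<and> (\<forall>p\<in>S0. Nu p = cis (\<psi> p))"
proof -
  have nz: "\<And>p. p \<in> S0 \<Longrightarrow> Nu p \<noteq> 0"
    using unit by (auto simp: S0_def Nu_def) (metis norm_zero zero_neq_one)
  obtain g where g: "continuous_on S0 g" "\<And>p. p \<in> S0 \<Longrightarrow> Nu p = exp (g p)"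
    using continuous_logarithm_on_simply_connected[OF contNu
        convex_imp_simply_connected[OF S0_convex] convex_imp_locally_path_connected[OF S0_convex] nz]
    by metis
  have "Nu p = cis (Im (g p))" if p: "p \<in> S0" for p
  proof -
    obtain u t where ut: "p = (u,t)" "t \<ge> 0" using p by (cases p) auto
    have e1: "norm (Nu p) = 1" using unit ut by simp
    have "exp (Re (g p)) = 1" using e1 unfolding g(2)[OF p] by (simp add: norm_exp_eq_Re)
    then have "Re (g p) = 0" by simp
    then have "g p = \<i> * complex_of_real (Im (g p))" by (simp add: complex_eq_iff)
    then show ?thesis using g(2)[OF p] by (metis cis_conv_exp)
  qed
  moreover have "continuous_on S0 (\<lambda>p. Im (g p))" using g(1) by (intro continuous_intros)
  ultimately show ?thesis by blast
qed

definition "psi = (SOME \<psi>. continuous_on S0 \<psi> \<and> (\<forall>p\<in>S0. Nu p = cis (\<psi> p)))"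

lemma psi: "continuous_on S0 psi" "\<And>p. p \<in> S0 \<Longrightarrow> Nu p = cis (psi p)"
  using someI_ex[OF lift_exists] unfolding psi_def[symmetric] by auto

lemma psi_cis: "t \<ge> 0 \<Longrightarrow> \<nu> u t = cis (psi (u,t))"
  using psi(2)[of "(u,t)"] by simp

lemma psi_cont_v: "t \<ge> 0 \<Longrightarrow> continuous_on UNIV (\<lambda>v. psi (v,t))"
  by (rule continuous_on_compose2[OF psi(1)]) (auto intro!: continuous_intros)

lemma psi_dv: "t \<ge> 0 \<Longrightarrow> ((\<lambda>v. psi (v,t)) has_real_derivative leg_ell \<nu> u t) (at u)"
proof -
  assume t: "t \<ge> 0"
  have "((\<lambda>v. psi (v,t)) has_real_derivative (du \<nu> u t \<bullet> (\<i> * \<nu> u t))) (at u)"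
  proof (rule lift_deriv[where U=UNIV and f="\<lambda>s. \<nu> s t"])
    show "\<And>s. s \<in> UNIV \<Longrightarrow> \<nu> s t = cis (psi (s, t))" using psi_cis t by blast
    show "isCont (\<lambda>v. psi (v, t)) u" using psi_cont_v[OF t] by (simp add: continuous_on_eq_continuous_at)
    show "((\<lambda>s. \<nu> s t) has_vector_derivative du \<nu> u t) (at u)" by (rule nu_du[OF t])
  qed auto
  then show ?thesis by (simp add: leg_ell_def Jrot_def)
qed

lemma psi_dt: "t > 0 \<Longrightarrow> ((\<lambda>s. psi (u,s)) has_real_derivative (dt \<nu> u t \<bullet> (\<i> * \<nu> u t))) (at t)"
proof -
  assume t: "t > 0"
  show ?thesis
  proof (rule lift_deriv[where U="{0<..}" and f="\<lambda>s. \<nu> u s"])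
    show "\<And>s. s \<in> {0<..} \<Longrightarrow> \<nu> u s = cis (psi (u, s))" using psi_cis by auto
    have "continuous_on {0<..} (\<lambda>s. psi (u,s))"
      by (rule continuous_on_compose2[OF psi(1)]) (auto intro!: continuous_intros)
    then show "isCont (\<lambda>s. psi (u, s)) t" using t
      by (meson continuous_on_eq_continuous_at greaterThan_iff open_greaterThan)
    show "((\<lambda>s. \<nu> u s) has_vector_derivative dt \<nu> u t) (at t)" by (rule nu_dt[OF t])
  qed (use t in auto)
qed

definition "Gp d = (\<lambda>p. pd2 d Nu p \<bullet> (\<i> * Nu p))"

lemma smooth_Gp: "smooth_on2 S (Gp d)"
  unfolding Gp_def
  by (intro smooth_inner smooth_mult S_open smooth_imp(3)[OF smoothNu] smoothNu smooth_const)

lemma psi_smooth: "smooth_on2 S psi"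
proof (rule smooth_from_partials[OF S_open _ _ smooth_Gp])
  show "continuous_on S psi" using psi(1) S_sub continuous_on_subset by blast
  fix d x assume x: "x \<in> S"
  obtain u t where ut: "x = (u,t)" "t > 0" using x by (cases x) auto
  show "((\<lambda>s. psi (line2 d x s)) has_vector_derivative Gp d x) (at (coord2 d x))"
  proof (cases d)
    case True
    then show ?thesis using psi_dt[OF ut(2), of u] ut
      by (simp add: line2_def coord2_def Gp_def dt_pd2 Nu_def[symmetric] has_real_derivative_iff_has_vector_derivative)
  next
    case False
    then show ?thesis using psi_dv[of t u] ut
      by (simp add: line2_def coord2_def Gp_def du_pd2 leg_ell_def Jrot_def Nu_def[symmetric] has_real_derivative_iff_has_vector_derivative)
  qed
qed

end

context icf_setup begin

definition "kk p = (psi (fst p + 2*pi, snd p) - psi p) / (2*pi)"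

lemma kk_int: "p \<in> S0 \<Longrightarrow> \<exists>m::int. kk p = m"
proof -
  assume p: "p \<in> S0"
  obtain u t where ut: "p = (u,t)" "t \<ge> 0" using p by (cases p) auto
  have "cis (psi (u + 2*pi, t)) = cis (psi (u,t))"
    using psi_cis[OF ut(2), of u] psi_cis[OF ut(2), of "u+2*pi"] perNu[OF ut(2)] by simp
  then obtain m :: int where "psi (u + 2*pi, t) = psi (u,t) + 2*pi*m" using cis_eq_int by blast
  then show ?thesis using ut by (intro exI[of _ m]) (simp add: kk_def)
qed

lemma kk_cont: "continuous_on S0 kk"
proof -
  have "continuous_on S0 (\<lambda>p. psi (fst p + 2*pi, snd p))"
    by (rule continuous_on_compose2[OF psi(1)]) (auto intro!: continuous_intros simp: S0_def)
  then show ?thesis unfolding kk_def using psi(1) by (intro continuous_intros) auto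
qed

lemma kk_const: "p \<in> S0 \<Longrightarrow> kk p = kk (0,0)"
proof -
  assume p: "p \<in> S0"
  have "kk constant_on S0"
  proof (rule continuous_discrete_range_constant[OF convex_connected[OF S0_convex] kk_cont])
    fix x assume x: "x \<in> S0"
    show "\<exists>e>0. \<forall>y. y \<in> S0 \<and> kk y \<noteq> kk x \<longrightarrow> e \<le> norm (kk y - kk x)"
    proof (intro exI[of _ 1] conjI allI impI)
      fix y assume y: "y \<in> S0 \<and> kk y \<noteq> kk x"
      obtain a b :: int where ab: "kk y = a" "kk x = b" using kk_int x y by blast
      then have "a \<noteq> b" using y by auto
      then have "1 \<le> \<bar>a - b\<bar>" by linarith
      then have "real_of_int 1 \<le> real_of_int \<bar>a - b\<bar>" by (simp only: of_int_le_iff)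
      then have "1 \<le> \<bar>real_of_int a - real_of_int b\<bar>" by simp
      then show "1 \<le> norm (kk y - kk x)" using ab by simp
    qed simp
  qed
  then show ?thesis using p by (auto simp: constant_on_def S0_def)
qed

lemma psi_dv_pos: "t \<ge> 0 \<Longrightarrow> \<exists>y. ((\<lambda>v. psi (v,t)) has_real_derivative y) (at x) \<and> y > 0"
  using psi_dv[of t x] ell_pos[of t x] by blast

lemma kk0_pos: "kk (0,0) > 0"
proof -
  have "(\<lambda>v. psi (v,0)) 0 < (\<lambda>v. psi (v,0)) (0 + 2*pi)"
    by (rule DERIV_pos_imp_increasing[where f="\<lambda>v. psi (v,0)"]) (use psi_dv_pos in auto)
  then show ?thesis by (simp add: kk_def)
qed

definition "nn = nat \<lfloor>kk (0,0)\<rfloor>"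

lemma nn_real: "real nn = kk (0,0)" and nn_pos: "nn \<ge> 1"
proof -
  obtain m :: int where m: "kk (0,0) = m" using kk_int[of "(0,0)"] by auto
  then have "m > 0" using kk0_pos by simp
  then show "real nn = kk (0,0)" "nn \<ge> 1" using m by (auto simp: nn_def)
qed

lemma psi_per: "t \<ge> 0 \<Longrightarrow> psi (v + 2*pi, t) = psi (v,t) + 2*pi*nn"
  using kk_const[of "(v,t)"] nn_real by (simp add: kk_def field_simps)

lemma psi_mono: "t \<ge> 0 \<Longrightarrow> v < w \<Longrightarrow> psi (v,t) < psi (w,t)"
  using DERIV_pos_imp_increasing[where f="\<lambda>v. psi (v,t)" and a=v and b=w] psi_dv_pos by auto

lemma psi_per_nat: "t \<ge> 0 \<Longrightarrow> psi (v + 2*pi*real m, t) = psi (v,t) + 2*pi*nn*real m"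
proof (induction m arbitrary: v)
  case 0 then show ?case by simp
next
  case (Suc m)
  have "psi (v + 2*pi*Suc m, t) = psi ((v + 2*pi*m) + 2*pi, t)" by (simp add: algebra_simps)
  also have "\<dots> = psi (v + 2*pi*m, t) + 2*pi*nn" using psi_per Suc by blast
  finally show ?case using Suc by (simp add: algebra_simps)
qed

lemma psi_surj: "t \<ge> 0 \<Longrightarrow> \<exists>v. psi (v,t) = w"
proof -
  assume t: "t \<ge> 0"
  define m :: nat where "m = nat \<lceil>\<bar>w - psi (0,t)\<bar> / (2*pi)\<rceil>"
  have m: "\<bar>w - psi (0,t)\<bar> \<le> 2*pi*m"
  proof -
    have "\<bar>w - psi (0,t)\<bar> / (2*pi) \<le> m" unfolding m_def by linarith
    then show ?thesis by (simp add: field_simps)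
  qed
  have nm: "2*pi*real m \<le> 2*pi*real nn*real m"
  proof -
    have "real m * 1 \<le> real m * real nn" using nn_pos by (intro mult_left_mono) auto
    then show ?thesis by (simp add: algebra_simps)
  qed
  have m1: "- (2*pi*real m) \<le> w - psi (0,t)" "w - psi (0,t) \<le> 2*pi*real m"
    using m by (simp_all only: abs_le_iff) linarith+
  have a: "psi (-2*pi*m, t) \<le> w"
  proof -
    have "psi (-2*pi*real m + 2*pi*real m, t) = psi (-2*pi*real m, t) + 2*pi*nn*real m" by (rule psi_per_nat[OF t])
    then have "psi (0, t) = psi (-2*pi*real m, t) + 2*pi*nn*real m" by simp
    then show ?thesis using m1 nm by linarith
  qed
  have b: "w \<le> psi (2*pi*m, t)"
  proof -
    have "psi (0 + 2*pi*real m, t) = psi (0, t) + 2*pi*nn*real m" by (rule psi_per_nat[OF t])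
    then have "psi (2*pi*real m, t) = psi (0, t) + 2*pi*nn*real m" by simp
    then show ?thesis using m1 nm by linarith
  qed
  have "\<exists>x. -2*pi*m \<le> x \<and> x \<le> 2*pi*m \<and> psi (x,t) = w"
    using IVT'[where f="\<lambda>v. psi (v,t)", OF a b] continuous_on_subset[OF psi_cont_v[OF t]] by auto
  then show ?thesis by blast
qed

lemma psi_inj: assumes t: "t \<ge> 0" and e: "psi (v,t) = psi (w,t)" shows "v = w"
proof (rule ccontr)
  assume "v \<noteq> w"
  then consider "v < w" | "w < v" by linarith
  then show False
  proof cases
    case 1 then have "psi (v,t) < psi (w,t)" by (rule psi_mono[OF t])
    then show False using e by simp
  next
    case 2 then have "psi (w,t) < psi (v,t)" by (rule psi_mono[OF t])
    then show False using e by simp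
  qed
qed

definition "phi u t = (THE v. psi (v,t) = real nn * u - pi/2)"

lemma phi_eq: "t \<ge> 0 \<Longrightarrow> psi (phi u t, t) = real nn * u - pi/2"
proof -
  assume t: "t \<ge> 0"
  obtain v where v: "psi (v,t) = real nn * u - pi/2" using psi_surj[OF t] by blast
  have "\<exists>!v. psi (v,t) = real nn * u - pi/2"
  proof (rule ex1I[of _ v])
    show "psi (v,t) = real nn * u - pi/2" by (rule v)
    fix w assume "psi (w,t) = real nn * u - pi/2"
    then show "w = v" using psi_inj[OF t, of w v] v by simp
  qed
  then show ?thesis unfolding phi_def by (rule theI')
qed

lemma phi_unique: "t \<ge> 0 \<Longrightarrow> psi (v,t) = real nn * u - pi/2 \<Longrightarrow> phi u t = v"
  using phi_eq[of t u] psi_inj[of t "phi u t" v] by simp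

lemma phi_per: "t \<ge> 0 \<Longrightarrow> phi (u + 2*pi) t = phi u t + 2*pi"
proof -
  assume t: "t \<ge> 0"
  have "psi (phi u t + 2*pi, t) = psi (phi u t, t) + 2*pi*nn" by (rule psi_per[OF t])
  also have "\<dots> = real nn * (u + 2*pi) - pi/2" using phi_eq[OF t] by (simp add: algebra_simps)
  finally show ?thesis by (rule phi_unique[OF t])
qed

lemma nu_phi0: "\<nu> (phi u 0) 0 = Complex (sin (real nn * u)) (- cos (real nn * u))"
  using psi_cis[of 0 "phi u 0"] phi_eq[of 0 u]
  by (simp add: cis.ctr cos_diff sin_diff)

end

context icf_setup begin

lemma Gp_False: "Gp False (v,t) = leg_ell \<nu> v t"
  by (simp add: Gp_def leg_ell_def du_pd2 Jrot_def Nu_def[symmetric])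
lemma Gp_True: "Gp True (v,t) = dt \<nu> v t \<bullet> (\<i> * \<nu> v t)"
  by (simp add: Gp_def dt_pd2 Nu_def[symmetric])

lemma psi_mono_le: "t \<ge> 0 \<Longrightarrow> psi (v,t) \<le> psi (w,t) \<Longrightarrow> v \<le> w"
  using psi_mono[of t w v] by force

lemma cont_within_S0: "continuous_on S0 f \<Longrightarrow> p \<in> S0 \<Longrightarrow> (f \<longlongrightarrow> f p) (at p within S0)"
  by (simp add: continuous_on_def)

lemma phi_cont: "continuous_on S0 (\<lambda>(u,t). phi u t)"
  unfolding continuous_on_def
proof (intro ballI)
  fix p0 assume p0: "p0 \<in> S0"
  obtain u0 t0 where ut0: "p0 = (u0,t0)" "t0 \<ge> 0" using p0 by (cases p0) auto
  define v0 where "v0 = phi u0 t0"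
  show "((\<lambda>(u,t). phi u t) \<longlongrightarrow> (\<lambda>(u,t). phi u t) p0) (at p0 within S0)"
  proof (rule tendstoI)
    fix e :: real assume e: "e > 0"
    define Fp where "Fp = (\<lambda>p. psi (v0 + e/2, snd p) - (real nn * fst p - pi/2))"
    define Fm where "Fm = (\<lambda>p. (real nn * fst p - pi/2) - psi (v0 - e/2, snd p))"
    have cFp: "continuous_on S0 Fp" unfolding Fp_def
      by (intro continuous_intros continuous_on_compose2[OF psi(1)]) (auto simp: S0_def)
    have cFm: "continuous_on S0 Fm" unfolding Fm_def
      by (intro continuous_intros continuous_on_compose2[OF psi(1)]) (auto simp: S0_def)
    have pe: "psi (v0,t0) = real nn * u0 - pi/2" using phi_eq[OF ut0(2)] by (simp add: v0_def)
    have "Fp p0 > 0" using psi_mono[OF ut0(2), of v0 "v0 + e/2"] e pe ut0 by (simp add: Fp_def)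
    then have ev1: "eventually (\<lambda>p. Fp p > 0) (at p0 within S0)"
      using order_tendstoD(1)[OF cont_within_S0[OF cFp p0]] by blast
    have "Fm p0 > 0" using psi_mono[OF ut0(2), of "v0 - e/2" v0] e pe ut0 by (simp add: Fm_def)
    then have ev2: "eventually (\<lambda>p. Fm p > 0) (at p0 within S0)"
      using order_tendstoD(1)[OF cont_within_S0[OF cFm p0]] by blast
    have ev3: "eventually (\<lambda>p. p \<in> S0) (at p0 within S0)"
      by (simp add: eventually_at_filter)
    show "eventually (\<lambda>p. dist ((\<lambda>(u,t). phi u t) p) ((\<lambda>(u,t). phi u t) p0) < e) (at p0 within S0)"
      using ev1 ev2 ev3
    proof eventually_elim
      case (elim p)
      obtain u t where ut: "p = (u,t)" "t \<ge> 0" using elim(3) by (cases p) auto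
      have pe': "psi (phi u t, t) = real nn * u - pi/2" by (rule phi_eq[OF ut(2)])
      have "phi u t \<le> v0 + e/2"
        using psi_mono_le[OF ut(2), of "phi u t" "v0 + e/2"] elim(1) pe' ut by (simp add: Fp_def)
      moreover have "v0 - e/2 \<le> phi u t"
        using psi_mono_le[OF ut(2), of "v0 - e/2" "phi u t"] elim(2) pe' ut by (simp add: Fm_def)
      ultimately show ?case using ut ut0 e by (simp add: dist_real_def v0_def abs_less_iff)
    qed
  qed
qed

lemma phi_cont_u: "t \<ge> 0 \<Longrightarrow> continuous_on UNIV (\<lambda>u. phi u t)"
proof -
  assume t: "t \<ge> 0"
  have "continuous_on UNIV (\<lambda>u. (u,t))" by (intro continuous_intros)
  moreover have "(\<lambda>u. (u,t)) ` UNIV \<subseteq> S0" using t by auto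
  ultimately show ?thesis using continuous_on_compose2[OF phi_cont, of UNIV "\<lambda>u. (u,t)"] by simp
qed

lemma phi_du: "t \<ge> 0 \<Longrightarrow> ((\<lambda>v. phi v t) has_real_derivative real nn / leg_ell \<nu> (phi u t) t) (at u)"
proof -
  assume t: "t \<ge> 0"
  have nn0: "real nn > 0" using nn_pos by simp
  have L: "leg_ell \<nu> (phi u t) t > 0" using ell_pos[OF t] .
  have "((\<lambda>v. phi v t) has_real_derivative inverse (leg_ell \<nu> (phi u t) t / real nn)) (at u)"
  proof (rule DERIV_inverse_function[where f="\<lambda>v. (psi (v,t) + pi/2) / real nn" and a="u - 1" and b="u + 1"])
    show "((\<lambda>v. (psi (v, t) + pi / 2) / real nn) has_real_derivative leg_ell \<nu> (phi u t) t / real nn) (at (phi u t))"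
      using psi_dv[OF t, of "phi u t"] nn0 by (auto intro!: derivative_eq_intros)
    show "leg_ell \<nu> (phi u t) t / real nn \<noteq> 0" using L nn0 by simp
    show "u - 1 < u" "u < u + 1" by auto
    show "\<And>y. u - 1 < y \<Longrightarrow> y < u + 1 \<Longrightarrow> (psi (phi y t, t) + pi / 2) / real nn = y"
      using phi_eq[OF t] nn0 by simp
    show "isCont (\<lambda>v. phi v t) u" using phi_cont_u[OF t] by (simp add: continuous_on_eq_continuous_at)
  qed
  then show ?thesis by (simp add: inverse_eq_divide)
qed

lemma psi_pd2: "p \<in> S \<Longrightarrow> pd2 d psi p = Gp d p"
proof -
  assume p: "p \<in> S"
  obtain v t where vt: "p = (v,t)" "t > 0" using p by (cases p) auto
  show ?thesis
  proof (cases d)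
    case True then show ?thesis using psi_dt[OF vt(2), of v] vt
      by (auto intro!: pd2_eqI simp: line2_def coord2_def Gp_True has_real_derivative_iff_has_vector_derivative)
  next
    case False then show ?thesis using psi_dv[of t v] vt
      by (auto intro!: pd2_eqI simp: line2_def coord2_def Gp_False has_real_derivative_iff_has_vector_derivative)
  qed
qed

lemma phi_dt: "t > 0 \<Longrightarrow> ((\<lambda>s. phi u s) has_real_derivative - Gp True (phi u t, t) / leg_ell \<nu> (phi u t) t) (at t)"
proof -
  assume t: "t > 0"
  have nn0: "real nn > 0" using nn_pos by simp
  define q where "q = (phi u t, t)"
  define L where "L = leg_ell \<nu> (phi u t) t"
  define P where "P = Gp True q"
  have L: "L > 0" using ell_pos t by (simp add: L_def)
  define w0 where "w0 = real nn * u - pi/2"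
  define F where "F = (\<lambda>(v,s). (psi (v,s), s))"
  define G where "G = (\<lambda>(w,s). (phi ((w + pi/2) / real nn) s, s))"
  define F' where "F' = (\<lambda>(a::real,b::real). (a * L + b * P, b))"
  define G' where "G' = (\<lambda>(a::real,b::real). ((a - b * P) / L, b))"
  have qS: "q \<in> S" using t by (simp add: q_def)
  have Gq: "G (w0, t) = q" using nn0 by (simp add: G_def w0_def q_def)
  have dpsi: "(psi has_derivative (\<lambda>(a,b). a *\<^sub>R L + b *\<^sub>R P)) (at q)"
    using smooth_has_derivative[OF S_open psi_smooth qS] psi_pd2[OF qS]
    by (simp add: P_def L_def q_def Gp_False)
  have dF: "(F has_derivative F') (at (G (w0,t)))"
    unfolding Gq F_def F'_def
    using has_derivative_Pair[OF dpsi has_derivative_snd[OF has_derivative_ident]]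
    by (simp add: case_prod_unfold)
  have blG': "bounded_linear G'"
  proof -
    have "linear G'" unfolding G'_def linear_iff by (auto simp: field_simps add_divide_distrib[symmetric] diff_divide_distrib[symmetric])
    then show ?thesis by (simp add: linear_conv_bounded_linear)
  qed
  have GF: "G' \<circ> F' = id" using L by (auto simp: G'_def F'_def fun_eq_iff field_simps)
  have cG: "continuous (at (w0,t)) G"
  proof -
    have c1: "continuous_on S (\<lambda>p. ((fst p + pi/2) / real nn, snd p))"
      using nn0 by (intro continuous_intros) auto
    have c2: "(\<lambda>p. ((fst p + pi/2) / real nn, snd p)) ` S \<subseteq> S0" by (auto simp: S_def)
    have "continuous_on S (\<lambda>p. phi ((fst p + pi/2) / real nn) (snd p))"
      using continuous_on_compose2[OF phi_cont c1 c2] by simp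
    then have "continuous_on S G" unfolding G_def case_prod_unfold
      by (intro continuous_intros) auto
    then show ?thesis using t S_open by (simp add: continuous_on_eq_continuous_at)
  qed
  have FG: "F (G z) = z" if zS: "z \<in> S" for z
  proof -
    obtain w s where z: "z = (w,s)" "s > 0" using zS by (cases z) auto
    show ?thesis using phi_eq[of s "(w + pi/2) / real nn"] z nn0 by (simp add: F_def G_def)
  qed
  have dG: "(G has_derivative G') (at (w0,t))"
    by (rule has_derivative_inverse_basic[OF dF blG' GF cG S_open _ FG]) (use t in simp)
  have "((\<lambda>s. G (w0, s)) has_derivative (\<lambda>h. G' (0, h))) (at t)"
  proof -
    have inner: "((\<lambda>s. (w0, s)) has_derivative (\<lambda>h. (0, h))) (at t)"
      by (intro has_derivative_Pair has_derivative_const has_derivative_ident)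
    show ?thesis using diff_chain_at[OF inner, of G G'] dG by (simp add: o_def)
  qed
  then have "((\<lambda>s. fst (G (w0, s))) has_derivative (\<lambda>h. fst (G' (0, h)))) (at t)"
    using has_derivative_fst by blast
  moreover have "(\<lambda>s. fst (G (w0, s))) = (\<lambda>s. phi u s)" using nn0 by (simp add: G_def w0_def)
  moreover have "(\<lambda>h. fst (G' (0, h))) = (*) (- P / L)" by (auto simp: G'_def fun_eq_iff)
  ultimately have "((\<lambda>s. phi u s) has_real_derivative (- P / L)) (at t)"
    unfolding has_field_derivative_def by metis
  then show ?thesis by (simp add: P_def L_def q_def)
qed

end

context icf_setup begin

definition "Hd d = (if d then (\<lambda>p. - Gp True p * (1 / Gp False p)) else (\<lambda>p. real nn * (1 / Gp False p)))"

lemma smooth_Hd: "smooth_on2 S (Hd d)"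
proof -
  have inv: "smooth_on2 S (\<lambda>p. 1 / Gp False p)"
  proof (rule smooth_inverse[OF S_open smooth_Gp])
    fix x assume "x \<in> S"
    then obtain v t where "x = (v,t)" "t > 0" by (cases x) auto
    then show "Gp False x \<noteq> 0" using ell_pos[of t v] by (simp add: Gp_False)
  qed
  show ?thesis
  proof (cases d)
    case True
    have "smooth_on2 S (\<lambda>p. - Gp True p * (1 / Gp False p))"
      by (rule smooth_mult[OF S_open smooth_uminus[OF S_open smooth_Gp] inv])
    then show ?thesis using True by (simp add: Hd_def)
  next
    case False
    have "smooth_on2 S (\<lambda>p. real nn * (1 / Gp False p))"
      by (rule smooth_mult[OF S_open smooth_const[OF S_open] inv])
    then show ?thesis using False by (simp add: Hd_def)
  qed
qed

lemma phi_smooth: "smooth_on2 S (\<lambda>(u,t). phi u t)"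
proof -
  let ?f = "\<lambda>(u,t). phi u t"
  have "smooth_on2 S (\<lambda>x. fst (?f x, snd x))"
  proof (rule smooth_implicit[OF S_open _ _ _ smooth_Hd smooth_fst[OF S_open]])
    show "continuous_on S ?f" using phi_cont S_sub continuous_on_subset by blast
    show "\<And>x. x \<in> S \<Longrightarrow> (?f x, snd x) \<in> S" by (auto simp: S_def)
    fix d x assume x: "x \<in> S"
    obtain u t where ut: "x = (u,t)" "t > 0" using x by (cases x) auto
    show "((\<lambda>s. ?f (line2 d x s)) has_vector_derivative Hd d (?f x, snd x)) (at (coord2 d x))"
    proof (cases d)
      case True
      then show ?thesis using phi_dt[OF ut(2), of u] ut
        by (simp add: line2_def coord2_def Hd_def Gp_False has_real_derivative_iff_has_vector_derivative divide_inverse)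
    next
      case False
      then show ?thesis using phi_du[of t u] ut
        by (simp add: line2_def coord2_def Hd_def Gp_False has_real_derivative_iff_has_vector_derivative divide_inverse)
    qed
  qed
  then show ?thesis by (simp add: case_prod_unfold)
qed

lemma phi_du_eq: "t \<ge> 0 \<Longrightarrow> du phi u t = real nn / leg_ell \<nu> (phi u t) t"
  unfolding du_def using phi_du[of t u]
  by (simp add: has_real_derivative_iff_has_vector_derivative vector_derivative_at)

lemma ell_cont: "continuous_on S0 (\<lambda>(v,t). leg_ell \<nu> v t)"
proof -
  have "continuous_on S0 (\<lambda>(v,t). du \<nu> v t)" using c01Nu by (simp add: C0C1_flow_def S0_def)
  then show ?thesis unfolding leg_ell_def Jrot_def case_prod_unfold
    using contNu unfolding Nu_def case_prod_unfold by (intro continuous_intros) auto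
qed

lemma phi_C0C1: "C0C1_flow phi"
  unfolding C0C1_flow_def
proof (intro conjI allI impI)
  fix t u :: real assume t: "t \<ge> 0"
  show "(\<lambda>v. phi v t) differentiable at u" using phi_du[OF t, of u] real_differentiable_def by blast
next
  show "continuous_on (UNIV \<times> {0..}) (\<lambda>(u,t). phi u t)" using phi_cont by (simp add: S0_def)
next
  have c1: "continuous_on S0 (\<lambda>p. (phi (fst p) (snd p), snd p))"
    using phi_cont by (auto intro!: continuous_intros simp: case_prod_unfold)
  have c2: "(\<lambda>p. (phi (fst p) (snd p), snd p)) ` S0 \<subseteq> S0" by (auto simp: S0_def)
  have "continuous_on S0 (\<lambda>p. leg_ell \<nu> (phi (fst p) (snd p)) (snd p))"
    using continuous_on_compose2[OF ell_cont c1 c2] by (simp add: case_prod_unfold)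
  then have "continuous_on S0 (\<lambda>p. real nn / leg_ell \<nu> (phi (fst p) (snd p)) (snd p))"
    using ell_pos by (intro continuous_intros) (auto simp: S0_def less_le)
  then show "continuous_on (UNIV \<times> {0..}) (\<lambda>(u,t). du phi u t)"
    unfolding S0_def by (rule continuous_on_eq) (auto simp: phi_du_eq)
qed

lemma phi_du_ne: "t \<ge> 0 \<Longrightarrow> du phi u t \<noteq> 0"
  using phi_du_eq[of t u] ell_pos[of t "phi u t"] nn_pos by simp

end

lemma pd2_prod_inner:
  fixes f g :: "real \<times> real \<Rightarrow> 'b::real_inner"
  assumes "ldiff S f" "ldiff S g" "p \<in> S"
  shows "pd2 d (\<lambda>x. f x \<bullet> g x) p = f p \<bullet> pd2 d g p + pd2 d f p \<bullet> g p"
  using bounded_bilinear.has_vector_derivative[OF bounded_bilinear_inner ldiff_hvd[OF assms(1,3), of d] ldiff_hvd[OF assms(2,3), of d]]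
  by (intro pd2_eqI) simp

lemma pd2_const_on:
  assumes "open S" "p \<in> S" "\<And>q. q \<in> S \<Longrightarrow> f q = c"
  shows "pd2 d f p = 0"
proof -
  have "pd2 d f p = pd2 d (\<lambda>_. c) p" by (rule pd2_local) (use assms in auto)
  then show ?thesis by (simp add: pd2_def)
qed

context icf_setup begin

definition "Xt u t = X (phi u t) t"
definition "Nt u t = \<nu> (phi u t) t"
definition "Nn p = pd2 True Xf p \<bullet> Nu p"

lemma Nt_du: "t \<ge> 0 \<Longrightarrow> du Nt u t = (real nn / leg_ell \<nu> (phi u t) t) *\<^sub>R du \<nu> (phi u t) t"
proof -
  assume t: "t \<ge> 0"
  have "(((\<lambda>s. \<nu> s t) \<circ> (\<lambda>v. phi v t)) has_vector_derivative
      (real nn / leg_ell \<nu> (phi u t) t) *\<^sub>R du \<nu> (phi u t) t) (at u)"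
    by (rule vector_diff_chain_at[OF _ nu_du[OF t]])
       (use phi_du[OF t, of u] in \<open>simp add: has_real_derivative_iff_has_vector_derivative\<close>)
  then show ?thesis unfolding du_def Nt_def by (simp add: o_def vector_derivative_at)
qed

lemma Xt_du: "t \<ge> 0 \<Longrightarrow> du Xt u t = (real nn / leg_ell \<nu> (phi u t) t) *\<^sub>R du X (phi u t) t"
proof -
  assume t: "t \<ge> 0"
  have "(((\<lambda>s. X s t) \<circ> (\<lambda>v. phi v t)) has_vector_derivative
      (real nn / leg_ell \<nu> (phi u t) t) *\<^sub>R du X (phi u t) t) (at u)"
    by (rule vector_diff_chain_at[OF _ X_du[OF t]])
       (use phi_du[OF t, of u] in \<open>simp add: has_real_derivative_iff_has_vector_derivative\<close>)
  then show ?thesis unfolding du_def Xt_def by (simp add: o_def vector_derivative_at)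
qed

lemma ell_t: "t \<ge> 0 \<Longrightarrow> leg_ell Nt u t = real nn"
  using Nt_du[of t u] ell_pos[of t "phi u t"]
  by (simp add: leg_ell_def Nt_def)

lemma beta_t: "t \<ge> 0 \<Longrightarrow> leg_beta Xt Nt u t = real nn / leg_ell \<nu> (phi u t) t * leg_beta X \<nu> (phi u t) t"
  using Xt_du[of t u] by (simp add: leg_beta_def Nt_def)

lemma Nn_eq: "t > 0 \<Longrightarrow> Nn (v,t) = leg_beta X \<nu> v t / leg_ell \<nu> v t"
  using normalv[of t v] by (simp add: Nn_def dt_pd2 Xf_def Nu_def)

lemma beta_t_Nn: "t > 0 \<Longrightarrow> leg_beta Xt Nt u t = real nn * Nn (phi u t, t)"
  using beta_t[of t u] Nn_eq[of t "phi u t"] by simp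

lemma smooth_Nn: "smooth_on2 S Nn"
  unfolding Nn_def by (intro smooth_inner S_open smooth_imp(3)[OF smoothXf] smoothNu)

end

context icf_setup begin

lemma main_identity:
  assumes t: "t > 0"
  shows "dt Xt u t = (leg_beta Xt Nt u t / leg_ell Nt u t) *\<^sub>R Nt u t +
           (du (leg_beta Xt Nt) u t / (leg_ell Nt u t)\<^sup>2) *\<^sub>R Jrot (Nt u t)"
proof -
  have t0: "t \<ge> 0" using t by simp
  define v0 where "v0 = phi u t"
  define q where "q = (v0, t)"
  have qS: "q \<in> S" using t by (simp add: q_def)
  define N0 where "N0 = \<nu> v0 t"
  define L where "L = leg_ell \<nu> v0 t"
  define P where "P = Gp True q"
  define Xv where "Xv = pd2 False Xf q"
  define Xtt where "Xtt = pd2 True Xf q"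
  define B where "B = Xv \<bullet> (\<i> * N0)"
  define Nv where "Nv = pd2 False Nn q"
  have nn0: "real nn > 0" using nn_pos by simp
  have L: "L > 0" using ell_pos[OF t0] by (simp add: L_def)
  have N0u: "norm N0 = 1" using unit[OF t0] by (simp add: N0_def)
  have ldX: "ldiff S Xf" and ldN: "ldiff S Nu" and ldXv: "ldiff S (pd2 False Xf)" and ldXt: "ldiff S (pd2 True Xf)"
    using smooth_imp(2)[OF smoothXf] smooth_imp(2)[OF smoothNu]
      smooth_imp(2)[OF smooth_imp(3)[OF smoothXf]] by auto
  have NvN: "pd2 False Nu q \<bullet> N0 = 0"
  proof -
    have "pd2 False (\<lambda>x. Nu x \<bullet> Nu x) q = 0"
    proof (rule pd2_const_on[OF S_open qS])
      fix x assume "x \<in> S"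
      then obtain a b where "x = (a,b)" "b > 0" by (cases x) auto
      then show "Nu x \<bullet> Nu x = 1" using unit[of b a] by (simp add: dot_square_norm)
    qed
    moreover have "pd2 False (\<lambda>x. Nu x \<bullet> Nu x) q = Nu q \<bullet> pd2 False Nu q + pd2 False Nu q \<bullet> Nu q"
      by (rule pd2_prod_inner[OF ldN ldN qS])
    ultimately show ?thesis by (simp add: N0_def q_def inner_commute)
  qed
  have Nv_dec: "pd2 False Nu q = L *\<^sub>R (\<i> * N0)"
  proof -
    have "pd2 False Nu q \<bullet> (\<i> * N0) = L"
      using Gp_False[of v0 t] by (simp add: Gp_def L_def N0_def q_def)
    then show ?thesis using decomp_unit[OF N0u, of "pd2 False Nu q"] NvN by simp
  qed
  have XvN: "Xv \<bullet> N0 = 0"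
    using legX[OF t0, of v0] by (simp add: Xv_def q_def du_pd2 Xf_def N0_def)
  have Xv_dec: "Xv = B *\<^sub>R (\<i> * N0)"
    using decomp_unit[OF N0u, of Xv] XvN by (simp add: B_def)
  have Xt_dec: "Xtt = (Xtt \<bullet> N0) *\<^sub>R N0 + (Xtt \<bullet> (\<i> * N0)) *\<^sub>R (\<i> * N0)"
    by (rule decomp_unit[OF N0u])
  have mixed: "pd2 True (pd2 False Xf) q \<bullet> N0 = - (Xv \<bullet> pd2 True Nu q)"
  proof -
    have "pd2 True (\<lambda>x. pd2 False Xf x \<bullet> Nu x) q = 0"
    proof (rule pd2_const_on[OF S_open qS])
      fix x assume "x \<in> S"
      then obtain a b where "x = (a,b)" "b > 0" by (cases x) auto
      then show "pd2 False Xf x \<bullet> Nu x = 0" using legX[of b a] by (simp add: du_pd2 Xf_def)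
    qed
    moreover have "pd2 True (\<lambda>x. pd2 False Xf x \<bullet> Nu x) q = pd2 False Xf q \<bullet> pd2 True Nu q + pd2 True (pd2 False Xf) q \<bullet> Nu q"
      by (rule pd2_prod_inner[OF ldXv ldN qS])
    ultimately show ?thesis by (simp add: Xv_def N0_def q_def)
  qed
  have Nv_eq: "Nv = - B * P + L * (Xtt \<bullet> (\<i> * N0))"
  proof -
    have "Nv = Xtt \<bullet> pd2 False Nu q + pd2 False (pd2 True Xf) q \<bullet> Nu q"
      unfolding Nv_def Nn_def Xtt_def by (rule pd2_prod_inner[OF ldXt ldN qS])
    also have "pd2 False (pd2 True Xf) q = pd2 True (pd2 False Xf) q"
      using schwarz[OF S_open smoothXf qS] by simp
    also have "Nu q = N0" by (simp add: N0_def q_def)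
    finally have "Nv = Xtt \<bullet> pd2 False Nu q - Xv \<bullet> pd2 True Nu q" using mixed by simp
    moreover have "Xv \<bullet> pd2 True Nu q = B * P"
      using Xv_dec by (simp add: P_def Gp_def N0_def q_def inner_commute)
    ultimately show ?thesis using Nv_dec by (simp add: algebra_simps)
  qed
  have ell_tt: "leg_ell Nt u t = real nn" by (rule ell_t[OF t0])
  have Nt0: "Nt u t = N0" by (simp add: Nt_def N0_def v0_def)
  have NnB: "Nn q = B / L"
    using Nn_eq[OF t, of v0] by (simp add: q_def B_def L_def leg_beta_def Xv_def du_pd2 Xf_def Jrot_def N0_def)
  have NnXt: "Nn q = Xtt \<bullet> N0" by (simp add: Nn_def Xtt_def N0_def q_def)
  have beta_tt: "leg_beta Xt Nt u t = real nn * (B / L)"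
    using beta_t_Nn[OF t, of u] NnB by (simp add: v0_def q_def)
  have dbeta: "du (leg_beta Xt Nt) u t = real nn * (Nv * (real nn / L))"
  proof -
    have d1: "((\<lambda>v. Nn (v,t)) has_real_derivative Nv) (at v0)"
      using ldiff_real_deriv[OF smooth_imp(2)[OF smooth_Nn] qS, of False]
      by (simp add: Nv_def q_def line2_def coord2_def)
    have "((\<lambda>u'. real nn * Nn (phi u' t, t)) has_real_derivative real nn * (Nv * (real nn / L))) (at u)"
      using DERIV_cmult[OF DERIV_chain2[OF d1[unfolded v0_def] phi_du[OF t0, of u]], of "real nn"] L_def v0_def
      by (simp add: algebra_simps)
    then have "((\<lambda>u'. leg_beta Xt Nt u' t) has_real_derivative real nn * (Nv * (real nn / L))) (at u)"
      by (rule has_field_derivative_transform_within_open[where S=UNIV]) (use beta_t_Nn[OF t] in auto)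
    then show ?thesis unfolding du_def
      by (simp add: has_real_derivative_iff_has_vector_derivative vector_derivative_at)
  qed
  have dXt: "dt Xt u t = (- P / L) *\<^sub>R Xv + Xtt"
  proof -
    have kd: "(Xf has_derivative (\<lambda>(a,b). a *\<^sub>R Xv + b *\<^sub>R Xtt)) (at ((\<lambda>s. (phi u s, s)) t))"
      using smooth_has_derivative[OF S_open smoothXf qS] by (simp add: Xv_def Xtt_def q_def v0_def)
    have pd: "((\<lambda>s. (phi u s, s)) has_vector_derivative (- P / L, 1)) (at t)"
      using phi_dt[OF t, of u]
      by (auto intro!: has_vector_derivative_Pair simp: has_real_derivative_iff_has_vector_derivative P_def L_def q_def v0_def)
    have "((\<lambda>s. Xf (phi u s, s)) has_vector_derivative (- P / L) *\<^sub>R Xv + 1 *\<^sub>R Xtt) (at t)"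
      by (rule chain_vec[OF kd pd])
    then show ?thesis unfolding dt_def Xt_def by (simp add: vector_derivative_at)
  qed
  have cN: "Xtt \<bullet> (\<i> * N0) = Nv / L + B * P / L"
    using Nv_eq L by (simp add: field_simps)
  show ?thesis
    unfolding dXt ell_tt beta_tt dbeta Nt0 Jrot_def
    apply (subst Xv_dec)
    apply (subst Xt_dec)
    apply (subst NnXt[symmetric])
    apply (subst NnB)
    using L nn0 Nv_eq
    apply (simp add: field_simps power2_eq_square scaleR_add_left)
    apply (subst cN)
    apply (simp add: scaleR_add_left)
    done
qed

end

lemma per_shift_nat:
  assumes "\<And>x. g (x + 2*pi) = g x"
  shows "g (x + 2*pi*real m) = g x"
proof (induction m)
  case 0 then show ?case by simp
next
  case (Suc m)
  have "g (x + 2*pi*real (Suc m)) = g ((x + 2*pi*real m) + 2*pi)" by (simp add: algebra_simps)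
  also have "\<dots> = g (x + 2*pi*real m)" by (rule assms)
  finally show ?case using Suc by simp
qed

lemma per_reduce:
  assumes "\<And>x. g (x + 2*pi) = g x"
  shows "\<exists>y\<in>{0..2*pi}. g x = g y"
proof -
  define k where "k = \<lfloor>x / (2*pi)\<rfloor>"
  define y where "y = x - 2*pi*k"
  have "k \<le> x / (2*pi)" "x / (2*pi) < k + 1" unfolding k_def by linarith+
  then have "2*pi*k \<le> x" "x < 2*pi*k + 2*pi" using pi_gt_zero by (simp_all add: field_simps)
  then have y: "y \<in> {0..2*pi}" by (simp add: y_def)
  have "g x = g y"
  proof (cases "k \<ge> 0")
    case True
    then have "x = y + 2*pi*real (nat k)" by (simp add: y_def)
    then show ?thesis using per_shift_nat[of g, OF assms] by simp
  next
    case False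
    then have "y = x + 2*pi*real (nat (-k))" by (simp add: y_def)
    then show ?thesis using per_shift_nat[of g, OF assms] by simp
  qed
  then show ?thesis using y by blast
qed

lemma lip_to_holder:
  fixes f :: "real \<Rightarrow> 'a::real_normed_vector"
  assumes a: "0 < \<alpha>" "\<alpha> \<le> 1" and K: "K \<ge> 0" and D: "D \<ge> 0"
    and lip: "\<And>x y. norm (f x - f y) \<le> K * \<bar>x - y\<bar>"
    and bd: "\<And>x y. norm (f x - f y) \<le> D"
  shows "norm (f x - f y) \<le> max K D * \<bar>x - y\<bar> powr \<alpha>"
proof (cases "\<bar>x - y\<bar> \<le> 1")
  case True
  have "\<bar>x - y\<bar> = \<bar>x - y\<bar> powr 1" by (cases "x = y") auto
  also have "\<dots> \<le> \<bar>x - y\<bar> powr \<alpha>" using True a by (intro powr_mono') auto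
  finally have "K * \<bar>x - y\<bar> \<le> max K D * \<bar>x - y\<bar> powr \<alpha>"
    using K by (intro mult_mono) auto
  then show ?thesis using lip[of x y] by linarith
next
  case False
  then have "1 \<le> \<bar>x - y\<bar> powr \<alpha>" using a by (intro ge_one_powr_ge_zero) auto
  then have "max K D * 1 \<le> max K D * \<bar>x - y\<bar> powr \<alpha>"
    using D by (intro mult_left_mono) auto
  then have "D \<le> max K D * \<bar>x - y\<bar> powr \<alpha>" by linarith
  then show ?thesis using bd[of x y] by linarith
qed

lemma holder_nonneg:
  assumes "holder a f"
  shows "\<exists>C\<ge>0. \<forall>x y. norm (f x - f y) \<le> C * \<bar>x - y\<bar> powr a"
proof -
  obtain C where C: "\<forall>x y. norm (f x - f y) \<le> C * \<bar>x - y\<bar> powr a" using assms holder_def by blast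
  have "norm (f x - f y) \<le> max C 0 * \<bar>x - y\<bar> powr a" for x y
  proof -
    have "C * \<bar>x - y\<bar> powr a \<le> max C 0 * \<bar>x - y\<bar> powr a"
      by (rule mult_right_mono[OF max.cobounded1 powr_ge_zero])
    then show ?thesis using C[rule_format, of x y] by linarith
  qed
  then show ?thesis by (intro exI[of _ "max C 0"]) auto
qed

lemma holder_comp_lip:
  fixes g :: "real \<Rightarrow> 'a::real_normed_vector"
  assumes a: "0 < \<alpha>" and hg: "holder \<alpha> g" and K: "K \<ge> 0"
    and lip: "\<And>x y. \<bar>ph x - ph y\<bar> \<le> K * \<bar>x - y\<bar>"
  shows "holder \<alpha> (\<lambda>x. g (ph x))"
proof -
  obtain C where C: "C \<ge> 0" "\<And>x y. norm (g x - g y) \<le> C * \<bar>x - y\<bar> powr \<alpha>"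
    using holder_nonneg[OF hg] by blast
  have "norm (g (ph x) - g (ph y)) \<le> (C * K powr \<alpha>) * \<bar>x - y\<bar> powr \<alpha>" for x y
  proof -
    have "norm (g (ph x) - g (ph y)) \<le> C * \<bar>ph x - ph y\<bar> powr \<alpha>" by (rule C(2))
    also have "\<dots> \<le> C * (K * \<bar>x - y\<bar>) powr \<alpha>"
      using C(1) a lip[of x y] by (intro mult_left_mono powr_mono2) auto
    also have "\<dots> = (C * K powr \<alpha>) * \<bar>x - y\<bar> powr \<alpha>" using K by (simp add: powr_mult)
    finally show ?thesis .
  qed
  then show ?thesis unfolding holder_def by blast
qed


lemma holder_main:
  fixes n0 d0 :: "real \<Rightarrow> complex" and ph :: "real \<Rightarrow> real"
  assumes a: "0 < \<alpha>" "\<alpha> \<le> 1"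
    and pn: "\<And>v. n0 (v + 2*pi) = n0 v" and pd: "\<And>v. d0 (v + 2*pi) = d0 v"
    and cd: "continuous_on UNIV d0" and hd: "holder \<alpha> d0"
    and nrm: "\<And>v. norm (n0 v) = 1"
    and der: "\<And>v. (n0 has_vector_derivative d0 v) (at v)"
    and lp: "\<And>v. d0 v \<bullet> (\<i> * n0 v) > 0"
    and c: "c > 0"
    and phd: "\<And>u. (ph has_real_derivative c / (d0 (ph u) \<bullet> (\<i> * n0 (ph u)))) (at u)"
  shows "holder \<alpha> (\<lambda>u. c / (d0 (ph u) \<bullet> (\<i> * n0 (ph u))))"
proof -
  define l where "l v = d0 v \<bullet> (\<i> * n0 v)" for v
  have cn: "continuous_on UNIV n0"
    using der by (meson continuous_at_imp_continuous_on has_vector_derivative_continuous)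
  have cl: "continuous_on UNIV l" unfolding l_def using cd cn by (intro continuous_intros)
  have pl: "\<And>v. l (v + 2*pi) = l v" by (simp add: l_def pn pd)
  obtain xm where xm: "xm \<in> {0..2*pi}" "\<And>y. y \<in> {0..2*pi} \<Longrightarrow> norm (d0 y) \<le> norm (d0 xm)"
  proof -
    have "continuous_on {0..2*pi} (\<lambda>v. norm (d0 v))"
      using continuous_on_subset[OF cd] by (intro continuous_intros) auto
    then show ?thesis using continuous_attains_sup[of "{0..2*pi}" "\<lambda>v. norm (d0 v)"] that by auto
  qed
  define M where "M = norm (d0 xm)"
  have M: "norm (d0 v) \<le> M" for v
  proof -
    obtain y where "y \<in> {0..2*pi}" "d0 v = d0 y" using per_reduce[of d0, OF pd] by blast
    then show ?thesis using xm(2) by (simp add: M_def)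
  qed
  have M0: "M \<ge> 0" by (simp add: M_def)
  obtain xn where xn: "xn \<in> {0..2*pi}" "\<And>y. y \<in> {0..2*pi} \<Longrightarrow> l xn \<le> l y"
  proof -
    have "continuous_on {0..2*pi} l" using continuous_on_subset[OF cl] by auto
    then show ?thesis using continuous_attains_inf[of "{0..2*pi}" l] that by auto
  qed
  define m where "m = l xn"
  have m: "m \<le> l v" for v
  proof -
    obtain y where "y \<in> {0..2*pi}" "l v = l y" using per_reduce[of l, OF pl] by blast
    then show ?thesis using xn(2) by (simp add: m_def)
  qed
  have m0: "m > 0" using lp by (simp add: m_def l_def)
  have nlip: "norm (n0 x - n0 y) \<le> M * \<bar>x - y\<bar>" for x y
  proof -
    have "norm (n0 x - n0 y) \<le> M * norm (x - y)"
    proof (rule differentiable_bound[where S=UNIV and f'="\<lambda>x h. h *\<^sub>R d0 x"])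
      show "convex (UNIV :: real set)" by simp
      fix z :: real
      show "(n0 has_derivative (\<lambda>h. h *\<^sub>R d0 z)) (at z within UNIV)"
        using der[of z] by (simp add: has_vector_derivative_def)
      have "onorm (\<lambda>h::real. h *\<^sub>R d0 z) = onorm (\<lambda>h::real. h) * norm (d0 z)"
        by (rule onorm_scaleR_left[OF bounded_linear_ident])
      then show "onorm (\<lambda>h::real. h *\<^sub>R d0 z) \<le> M" using M[of z] by (simp add: onorm_id)
    qed auto
    then show ?thesis by simp
  qed
  have nbd: "norm (n0 x - n0 y) \<le> 2" for x y
    using norm_triangle_ineq4[of "n0 x" "n0 y"] nrm by simp
  define C2 where "C2 = max M 2"
  have nhold: "norm (n0 x - n0 y) \<le> C2 * \<bar>x - y\<bar> powr \<alpha>" for x y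
    unfolding C2_def by (rule lip_to_holder[OF a M0 _ nlip nbd]) simp
  have C2: "C2 \<ge> 0" by (simp add: C2_def)
  obtain C1 where C1: "C1 \<ge> 0" "\<And>x y. norm (d0 x - d0 y) \<le> C1 * \<bar>x - y\<bar> powr \<alpha>"
    using holder_nonneg[OF hd] by blast
  define C3 where "C3 = C1 + M * C2"
  have lhold: "\<bar>l x - l y\<bar> \<le> C3 * \<bar>x - y\<bar> powr \<alpha>" for x y
  proof -
    have e: "l x - l y = (d0 x - d0 y) \<bullet> (\<i> * n0 x) + d0 y \<bullet> (\<i> * n0 x - \<i> * n0 y)"
      by (simp add: l_def inner_diff_left inner_diff_right)
    have "\<bar>(d0 x - d0 y) \<bullet> (\<i> * n0 x)\<bar> \<le> norm (d0 x - d0 y) * norm (\<i> * n0 x)"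
      by (rule Cauchy_Schwarz_ineq2)
    also have "\<dots> = norm (d0 x - d0 y)" using nrm by (simp add: norm_mult)
    finally have t1: "\<bar>(d0 x - d0 y) \<bullet> (\<i> * n0 x)\<bar> \<le> C1 * \<bar>x - y\<bar> powr \<alpha>" using C1(2)[of x y] by linarith
    have "\<bar>d0 y \<bullet> (\<i> * n0 x - \<i> * n0 y)\<bar> \<le> norm (d0 y) * norm (\<i> * n0 x - \<i> * n0 y)"
      by (rule Cauchy_Schwarz_ineq2)
    also have "norm (\<i> * n0 x - \<i> * n0 y) = norm (n0 x - n0 y)"
      by (metis norm_ii mult.left_neutral norm_mult right_diff_distrib)
    also have "norm (d0 y) * norm (n0 x - n0 y) \<le> M * (C2 * \<bar>x - y\<bar> powr \<alpha>)"
      using M[of y] nhold[of x y] M0 by (intro mult_mono) auto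
    finally have t2: "\<bar>d0 y \<bullet> (\<i> * n0 x - \<i> * n0 y)\<bar> \<le> M * (C2 * \<bar>x - y\<bar> powr \<alpha>)" .
    have "\<bar>l x - l y\<bar> \<le> \<bar>(d0 x - d0 y) \<bullet> (\<i> * n0 x)\<bar> + \<bar>d0 y \<bullet> (\<i> * n0 x - \<i> * n0 y)\<bar>"
      unfolding e by (rule abs_triangle_ineq)
    then show ?thesis using t1 t2 by (simp add: C3_def algebra_simps)
  qed
  have ghold: "holder \<alpha> (\<lambda>v. c / l v)"
    unfolding holder_def
  proof (intro exI allI)
    fix x y
    have lx: "l x \<ge> m" "l y \<ge> m" using m by auto
    have "c / l x - c / l y = c * (l y - l x) / (l x * l y)"
      using lx m0 by (simp add: field_simps)
    then have "\<bar>c / l x - c / l y\<bar> = c * \<bar>l x - l y\<bar> / (l x * l y)"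
      using lx m0 c by (simp add: abs_mult abs_minus_commute)
    also have "\<dots> \<le> c * \<bar>l x - l y\<bar> / (m * m)"
      using lx m0 c by (intro divide_left_mono mult_mono) auto
    also have "\<dots> \<le> c * (C3 * \<bar>x - y\<bar> powr \<alpha>) / (m * m)"
      using lhold[of x y] c m0 by (intro divide_right_mono mult_left_mono) auto
    finally show "norm (c / l x - c / l y) \<le> (c * C3 / (m * m)) * \<bar>x - y\<bar> powr \<alpha>" by simp
  qed
  have plip: "\<bar>ph x - ph y\<bar> \<le> (c / m) * \<bar>x - y\<bar>" for x y
  proof -
    have "norm (ph x - ph y) \<le> (c / m) * norm (x - y)"
    proof (rule field_differentiable_bound[where S=UNIV])
      fix z :: real
      show "(ph has_field_derivative c / l (ph z)) (at z within UNIV)" using phd[of z] by (simp add: l_def)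
      have "l (ph z) \<ge> m" by (rule m)
      then show "norm (c / l (ph z)) \<le> c / m" using m0 c by (simp add: frac_le)
    qed auto
    then show ?thesis by simp
  qed
  show ?thesis
    using holder_comp_lip[OF a(1) ghold _ plip] c m0 by (simp add: l_def)
qed


lemma per_deriv:
  fixes f :: "real \<Rightarrow> complex"
  assumes per: "\<And>v. f (v + c) = f v" and dif: "\<And>v. f differentiable (at v)"
  shows "vector_derivative f (at (v + c)) = vector_derivative f (at v)"
proof -
  have "(f has_vector_derivative vector_derivative f (at (v + c))) (at (v + c))"
    using dif vector_derivative_works by blast
  then have "((f \<circ> (\<lambda>s. s + c)) has_vector_derivative (1 *\<^sub>R vector_derivative f (at (v + c)))) (at v)"
    by (intro vector_diff_chain_at) (auto intro!: derivative_eq_intros)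
  moreover have "f \<circ> (\<lambda>s. s + c) = f" using per by (simp add: fun_eq_iff)
  ultimately show ?thesis by (simp add: vector_derivative_at)
qed

theorem proposition3p2:
  fixes \<alpha> :: real
    and F :: "real \<Rightarrow> real \<Rightarrow> real"
    and X \<nu> :: "real \<Rightarrow> real \<Rightarrow> complex"
    and X0 \<nu>0 :: "real \<Rightarrow> complex"
  assumes "0 < \<alpha>" "\<alpha> < 1"
    and "smooth_flow F" "\<forall>t>0. \<forall>u. F (u + 2*pi) t = F u t"
    and "C1alpha \<alpha> X0" "C1alpha \<alpha> \<nu>0"
    and "\<forall>u. vector_derivative \<nu>0 (at u) \<bullet> Jrot (\<nu>0 u) > 0"
    and "\<forall>u. X u 0 = X0 u" "\<forall>u. \<nu> u 0 = \<nu>0 u"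
    and "inverse_curvature_flow X \<nu>"
    and "\<forall>t>0. \<forall>u. dt X u t \<bullet> Jrot (\<nu> u t) =
            du (leg_beta X \<nu>) u t / (leg_ell \<nu> u t)\<^sup>2 + F u t * leg_beta X \<nu> u t"
  shows "\<exists>(n::nat) (\<phi>::real \<Rightarrow> real \<Rightarrow> real).
     C0C1_flow \<phi> \<and> smooth_flow \<phi> \<and> C1alpha \<alpha> (\<lambda>u. \<phi> u 0) \<and>
     (\<exists>d\<in>{1, -1::real}. \<forall>t\<ge>0. \<forall>u. \<phi> (u + 2*pi) t = \<phi> u t + 2*pi*d) \<and>
     (\<forall>t\<ge>0. \<forall>u. du \<phi> u t \<noteq> 0) \<and>
     (let Xt = (\<lambda>u t. X (\<phi> u t) t); \<nu>t = (\<lambda>u t. \<nu> (\<phi> u t) t) in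
       (\<forall>u. \<nu>t u 0 = Complex (sin (real n * u)) (- cos (real n * u))) \<and>
       (\<forall>t>0. \<forall>u. dt Xt u t =
           (leg_beta Xt \<nu>t u t / leg_ell \<nu>t u t) *\<^sub>R \<nu>t u t +
           (du (leg_beta Xt \<nu>t) u t / (leg_ell \<nu>t u t)\<^sup>2) *\<^sub>R Jrot (\<nu>t u t)))"
proof -
  note a = assms
  have nu0fun: "(\<lambda>v. \<nu> v 0) = \<nu>0" using a(9) by (simp add: fun_eq_iff)
  have ell0: "\<forall>u. leg_ell \<nu> u 0 > 0"
    using a(7) a(9) by (simp add: leg_ell_def du_def nu0fun)
  interpret I: icf_setup X \<nu> by unfold_locales (use a(10) ell0 in auto)
  define d0 where "d0 v = vector_derivative \<nu>0 (at v)" for v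
  have c1: "C1alpha \<alpha> (\<lambda>u. I.phi u 0)"
    unfolding C1alpha_def
  proof (intro conjI allI)
    fix u
    show "(\<lambda>u. I.phi u 0) differentiable at u" using I.phi_du[of 0 u] real_differentiable_def by auto
  next
    have vd: "vector_derivative (\<lambda>u. I.phi u 0) (at u) = du I.phi u 0" for u by (simp add: du_def)
    have "continuous_on UNIV (\<lambda>u. du I.phi u 0)"
    proof -
      have "continuous_on (UNIV \<times> {0..}) (\<lambda>(u,t). du I.phi u t)"
        using I.phi_C0C1 by (simp add: C0C1_flow_def)
      moreover have "continuous_on UNIV (\<lambda>u. (u, 0::real))" by (intro continuous_intros)
      moreover have "(\<lambda>u. (u, 0::real)) ` UNIV \<subseteq> UNIV \<times> {0..}" by auto
      ultimately show ?thesis using continuous_on_compose2 by fastforce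
    qed
    then show "continuous_on UNIV (\<lambda>u. vector_derivative (\<lambda>u. I.phi u 0) (at u))" by (simp add: vd)
  next
    have dif0: "\<And>v. \<nu>0 differentiable (at v)" using a(6) by (simp add: C1alpha_def)
    have pn: "\<And>v. \<nu>0 (v + 2*pi) = \<nu>0 v" using I.perNu[of 0] a(9) by simp
    have h: "holder \<alpha> (\<lambda>u. real I.nn / (d0 (I.phi u 0) \<bullet> (\<i> * \<nu>0 (I.phi u 0))))"
    proof (rule holder_main)
      show "0 < \<alpha>" "\<alpha> \<le> 1" using a(1,2) by auto
      show "\<And>v. \<nu>0 (v + 2*pi) = \<nu>0 v" by (rule pn)
      show "\<And>v. d0 (v + 2*pi) = d0 v" unfolding d0_def by (rule per_deriv[OF pn dif0])
      show "continuous_on UNIV d0" "holder \<alpha> d0" using a(6) by (simp_all add: C1alpha_def d0_def[abs_def])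
      show "\<And>v. norm (\<nu>0 v) = 1" using I.unit[of 0] a(9) by simp
      show "\<And>v. (\<nu>0 has_vector_derivative d0 v) (at v)" unfolding d0_def using dif0 vector_derivative_works by blast
      show "\<And>v. d0 v \<bullet> (\<i> * \<nu>0 v) > 0" using a(7) by (simp add: d0_def Jrot_def)
      show "real I.nn > 0" using I.nn_pos by simp
      show "\<And>u. ((\<lambda>u. I.phi u 0) has_real_derivative real I.nn / (d0 (I.phi u 0) \<bullet> (\<i> * \<nu>0 (I.phi u 0)))) (at u)"
        using I.phi_du[of 0] a(9) by (simp add: leg_ell_def du_def nu0fun d0_def Jrot_def)
    qed
    moreover have "vector_derivative (\<lambda>u. I.phi u 0) (at u) = real I.nn / (d0 (I.phi u 0) \<bullet> (\<i> * \<nu>0 (I.phi u 0)))" for u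
      using I.phi_du_eq[of 0 u] a(9) by (simp add: du_def leg_ell_def nu0fun d0_def Jrot_def)
    ultimately show "holder \<alpha> (\<lambda>u. vector_derivative (\<lambda>u. I.phi u 0) (at u))" by simp
  qed
  have Xt_eq: "(\<lambda>u t. X (I.phi u t) t) = I.Xt" by (simp add: fun_eq_iff I.Xt_def)
  have Nt_eq: "(\<lambda>u t. \<nu> (I.phi u t) t) = I.Nt" by (simp add: fun_eq_iff I.Nt_def)
  show ?thesis
  proof (intro exI[of _ I.nn] exI[of _ I.phi] conjI)
    show "C0C1_flow I.phi" by (rule I.phi_C0C1)
    show "smooth_flow I.phi" using I.phi_smooth by (simp add: smooth_flow_def I.S_def)
    show "C1alpha \<alpha> (\<lambda>u. I.phi u 0)" by (rule c1)
    show "\<exists>d\<in>{1, -1::real}. \<forall>t\<ge>0. \<forall>u. I.phi (u + 2*pi) t = I.phi u t + 2*pi*d"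
      using I.phi_per by (intro bexI[of _ 1]) auto
    show "\<forall>t\<ge>0. \<forall>u. du I.phi u t \<noteq> 0" using I.phi_du_ne by blast
    show "let Xt = (\<lambda>u t. X (I.phi u t) t); \<nu>t = (\<lambda>u t. \<nu> (I.phi u t) t) in
       (\<forall>u. \<nu>t u 0 = Complex (sin (real I.nn * u)) (- cos (real I.nn * u))) \<and>
       (\<forall>t>0. \<forall>u. dt Xt u t =
           (leg_beta Xt \<nu>t u t / leg_ell \<nu>t u t) *\<^sub>R \<nu>t u t +
           (du (leg_beta Xt \<nu>t) u t / (leg_ell \<nu>t u t)\<^sup>2) *\<^sub>R Jrot (\<nu>t u t))"
      unfolding Let_def Xt_eq Nt_eq
      using I.main_identity I.nu_phi0 by (simp add: I.Nt_def)
  qed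
qed

end
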